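(* Let $\mathcal{A}$ be the ring of adeles of $\mathbb{Q}$ with $\mathbb{Q}^*$ acting by multiplication through the diagonal embedding. If $a\in\mathcal{A}$ is not invertible, then $$\overline{\mathbb{Q}^*a}=\{b\in\mathcal{A}: \text{for every } p\in\mathcal{P}\cup\{\infty\},\ a_p=0\implies b_p=0\}.$$
   Context: $\mathcal{P}$ is the set of primes. $\mathcal{A}=\mathcal{A}_f\times\mathbb{R}$, where $\mathcal{A}_f=\{(a_p)\in\prod_{p\in\mathcal{P}}\mathbb{Q}_p: a_p\in\mathbb{Z}_p\text{ for almost all }p\}$ with the restricted product topology; $\mathcal{A}$ has the product topology and componentwise operations, $\mathbb{Q}$ embedded diagonally. For $a\in\mathcal{A}$ write $a=((a_p)_{p\in\mathcal{P}},a_\infty)$. An adele is invertible iff all $a_p\ne0$, $a_\infty\ne0$ and $a_p\in\mathbb{Z}_p^*$ for almost all $p$. *)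

theory Defs
  imports "HOL-Analysis.Analysis" "HOL-Computational_Algebra.Computational_Algebra"
begin

definition pval :: "nat \<Rightarrow> rat \<Rightarrow> int" where
  "pval p q = int (multiplicity (int p) (fst (quotient_of q)))
            - int (multiplicity (int p) (snd (quotient_of q)))"

definition padic_abs :: "nat \<Rightarrow> rat \<Rightarrow> real" where
  "padic_abs p q = (if q = 0 then 0 else real p powr (- real_of_int (pval p q)))"

definition pcauchy :: "nat \<Rightarrow> (nat \<Rightarrow> rat) \<Rightarrow> bool" where
  "pcauchy p X \<longleftrightarrow> (\<forall>e>0. \<exists>N. \<forall>m\<ge>N. \<forall>n\<ge>N. padic_abs p (X m - X n) < e)"

definition pequiv :: "nat \<Rightarrow> (nat \<Rightarrow> rat) \<Rightarrow> (nat \<Rightarrow> rat) \<Rightarrow> bool" where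
  "pequiv p X Y \<longleftrightarrow> (\<lambda>n. padic_abs p (X n - Y n)) \<longlonglongrightarrow> 0"

type_synonym padic = "(nat \<Rightarrow> rat) set"

definition pclass :: "nat \<Rightarrow> (nat \<Rightarrow> rat) \<Rightarrow> padic" where
  "pclass p X = {Y. pcauchy p Y \<and> pequiv p X Y}"

definition Qp :: "nat \<Rightarrow> padic set" where
  "Qp p = {pclass p X | X. pcauchy p X}"

definition prep :: "padic \<Rightarrow> nat \<Rightarrow> rat" where
  "prep x = (SOME X. X \<in> x)"

definition pof_rat :: "nat \<Rightarrow> rat \<Rightarrow> padic" where
  "pof_rat p q = pclass p (\<lambda>_. q)"

definition pmul :: "nat \<Rightarrow> padic \<Rightarrow> padic \<Rightarrow> padic" where
  "pmul p x y = pclass p (\<lambda>n. prep x n * prep y n)"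

definition pdist :: "nat \<Rightarrow> padic \<Rightarrow> padic \<Rightarrow> real" where
  "pdist p x y = lim (\<lambda>n. padic_abs p (prep x n - prep y n))"

definition Zp :: "nat \<Rightarrow> padic set" where
  "Zp p = {x \<in> Qp p. pdist p x (pof_rat p 0) \<le> 1}"

definition padic_open :: "nat \<Rightarrow> padic set \<Rightarrow> bool" where
  "padic_open p U \<longleftrightarrow> U \<subseteq> Qp p \<and>
     (\<forall>x\<in>U. \<exists>e>0. \<forall>y\<in>Qp p. pdist p x y < e \<longrightarrow> y \<in> U)"

text \<open>An adele is a pair (finite part indexed by primes, real component).
  Components at non-primes are fixed to the empty set (dummy value).\<close>
type_synonym adele = "(nat \<Rightarrow> padic) \<times> real"

definition adeles :: "adele set" where
  "adeles = {(af, r). (\<forall>p. prime p \<longrightarrow> af p \<in> Qp p) \<and> (\<forall>p. \<not> prime p \<longrightarrow> af p = {})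
                     \<and> finite {p. prime p \<and> af p \<notin> Zp p}}"

definition adele_mul :: "adele \<Rightarrow> adele \<Rightarrow> adele" where
  "adele_mul a b = ((\<lambda>p. if prime p then pmul p (fst a p) (fst b p) else {}), snd a * snd b)"

definition adele_of_rat :: "rat \<Rightarrow> adele" where
  "adele_of_rat q = ((\<lambda>p. if prime p then pof_rat p q else {}), of_rat q)"

definition adele_invertible :: "adele \<Rightarrow> bool" where
  "adele_invertible a \<longleftrightarrow> (\<exists>b\<in>adeles. adele_mul a b = adele_of_rat 1)"

definition adele_basic_opens :: "adele set set" where
  "adele_basic_opens = {{a \<in> adeles. (\<forall>p. prime p \<longrightarrow> fst a p \<in> U p) \<and> snd a \<in> V} | U V.
      (\<forall>p. prime p \<longrightarrow> padic_open p (U p)) \<and> finite {p. prime p \<and> U p \<noteq> Zp p} \<and> open V}"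

definition adele_topology :: "adele topology" where
  "adele_topology = topology_generated_by adele_basic_opens"

end

theory Submission
  imports Defs "HOL-Number_Theory.Number_Theory"
begin


context
  fixes p :: nat
  assumes p: "prime p"
begin

lemma p_gt1: "p > 1" using p prime_gt_1_nat by blast
lemma p0: "p > 0" using p_gt1 by simp
lemma pw_le1: "x \<ge> 0 \<Longrightarrow> real p powr (- x) \<le> 1"
  using powr_mono[of "-x" 0 "real p"] p_gt1 by simp
lemma ip_prime: "prime (int p)" using p by simp
lemma ip_not_unit: "\<not> is_unit (int p)" using ip_prime not_prime_unit by blast

lemma pval_frac:
  assumes "a \<noteq> 0" "b \<noteq> 0"
  shows "pval p (of_int a / of_int b) = int (multiplicity (int p) a) - int (multiplicity (int p) b)"
proof -
  obtain n d where nd: "quotient_of (of_int a / of_int b) = (n, d)"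
    by (cases "quotient_of (of_int a / of_int b :: rat)")
  have d: "d > 0" using quotient_of_denom_pos[OF nd] .
  have eq: "of_int a / of_int b = (of_int n / of_int d :: rat)" using quotient_of_div[OF nd] .
  have n: "n \<noteq> 0" using eq assms d by auto
  have "(of_int a * of_int d :: rat) = of_int n * of_int b" using eq assms d
    by (simp add: field_simps)
  then have "a * d = n * b" by (metis of_int_eq_iff of_int_mult)
  then have "multiplicity (int p) (a*d) = multiplicity (int p) (n*b)" by simp
  then have "multiplicity (int p) a + multiplicity (int p) d = multiplicity (int p) n + multiplicity (int p) b"
    using prime_elem_multiplicity_mult_distrib[OF _ assms(1), of "int p" d]
      prime_elem_multiplicity_mult_distrib[OF _ n assms(2), of "int p"] ip_prime d
    by simp
  then show ?thesis unfolding pval_def nd by simp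
qed

lemma rat_frac: fixes r :: rat obtains a b where "a \<noteq> 0" "b \<noteq> 0" "r = of_int a / of_int b" | "r = 0"
proof (cases "r = 0")
  case False
  obtain n d where nd: "quotient_of r = (n, d)" by (cases "quotient_of r")
  have "d > 0" using quotient_of_denom_pos[OF nd] .
  moreover have "r = of_int n / of_int d" using quotient_of_div[OF nd] .
  ultimately show ?thesis using that(1)[of n d] that(2) False by (cases "n = 0") auto
qed simp

lemma mult_add_ge:
  assumes "x + y \<noteq> (0::int)"
  shows "min (multiplicity (int p) x) (multiplicity (int p) y) \<le> multiplicity (int p) (x + y)"
proof -
  let ?k = "min (multiplicity (int p) x) (multiplicity (int p) y)"
  have "int p ^ ?k dvd x" "int p ^ ?k dvd y" by (auto intro: multiplicity_dvd')
  then have "int p ^ ?k dvd x + y" by simp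
  then show ?thesis using multiplicity_geI[OF assms ip_not_unit] by blast
qed

lemma pval_mult:
  assumes "r \<noteq> 0" "s \<noteq> 0"
  shows "pval p (r * s) = pval p r + pval p s"
proof -
  obtain a b where ab: "a \<noteq> 0" "b \<noteq> 0" "r = of_int a / of_int b" using rat_frac assms(1) by metis
  obtain c d where cd: "c \<noteq> 0" "d \<noteq> 0" "s = of_int c / of_int d" using rat_frac assms(2) by metis
  have e: "r * s = of_int (a * c) / of_int (b * d)" using ab cd by simp
  have "pval p (of_int (a * c) / of_int (b * d)) = int (multiplicity (int p) (a * c)) - int (multiplicity (int p) (b * d))"
    using ab cd by (intro pval_frac) auto
  then have "pval p (r * s) = int (multiplicity (int p) (a * c)) - int (multiplicity (int p) (b * d))"
    by (simp only: e)
  also have "\<dots> = pval p r + pval p s"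
    using pval_frac ab cd ip_prime
    by (simp add: prime_elem_multiplicity_mult_distrib)
  finally show ?thesis .
qed

lemma pval_add:
  assumes "r \<noteq> 0" "s \<noteq> 0" "r + s \<noteq> 0"
  shows "min (pval p r) (pval p s) \<le> pval p (r + s)"
proof -
  obtain a b where ab: "a \<noteq> 0" "b \<noteq> 0" "r = of_int a / of_int b" using rat_frac assms(1) by metis
  obtain c d where cd: "c \<noteq> 0" "d \<noteq> 0" "s = of_int c / of_int d" using rat_frac assms(2) by metis
  have rs: "r + s = of_int (a*d + c*b) / of_int (b * d)" using ab cd by (simp add: field_simps)
  have ne: "a*d + c*b \<noteq> 0" using rs assms(3) by (metis div_0 of_int_0)
  define M where "M = multiplicity (int p) (a*d + c*b)"
  define ma where "ma = multiplicity (int p) a"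
  define mb where "mb = multiplicity (int p) b"
  define mc where "mc = multiplicity (int p) c"
  define md where "md = multiplicity (int p) d"
  have "pval p (of_int (a*d + c*b) / of_int (b * d)) = int M - int (multiplicity (int p) (b * d))"
    unfolding M_def using ab cd ne by (intro pval_frac) auto
  then have prs0: "pval p (r+s) = int M - int (multiplicity (int p) (b * d))"
    by (simp only: rs)
  have "multiplicity (int p) (b * d) = mb + md"
    unfolding mb_def md_def using ab cd ip_prime by (intro prime_elem_multiplicity_mult_distrib) auto
  then have prs: "pval p (r+s) = int M - int (mb + md)" using prs0 by simp
  have "min (multiplicity (int p) (a*d)) (multiplicity (int p) (c*b)) \<le> M"
    unfolding M_def using mult_add_ge ne by blast
  then have mm: "min (ma + md) (mc + mb) \<le> M"
    using ab cd ip_prime unfolding ma_def mb_def mc_def md_def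
    by (subst (asm) (1 2) prime_elem_multiplicity_mult_distrib) auto
  have pr: "pval p r = int ma - int mb" "pval p s = int mc - int md"
    unfolding ma_def mb_def mc_def md_def using pval_frac ab cd by auto
  have "ma + md \<le> M \<or> mc + mb \<le> M" using mm by (simp add: min_le_iff_disj)
  then show ?thesis unfolding prs pr
  proof (elim disjE)
    assume "ma + md \<le> M"
    then have "int ma - int mb \<le> int M - int (mb + md)" by simp
    then show "min (int ma - int mb) (int mc - int md) \<le> int M - int (mb + md)" by (rule min.coboundedI1)
  next
    assume "mc + mb \<le> M"
    then have "int mc - int md \<le> int M - int (mb + md)" by simp
    then show "min (int ma - int mb) (int mc - int md) \<le> int M - int (mb + md)" by (rule min.coboundedI2)
  qed
qed

lemma pa_nz: "r \<noteq> 0 \<Longrightarrow> padic_abs p r = real p powr (- real_of_int (pval p r))"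
  by (simp add: padic_abs_def)

lemma pa_pos: "r \<noteq> 0 \<Longrightarrow> padic_abs p r > 0"
  using p0 by (simp add: padic_abs_def)

lemma pa_nonneg[simp]: "padic_abs p r \<ge> 0"
  using pa_pos[of r] by (cases "r = 0") (auto simp: padic_abs_def)

lemma pa_zero[simp]: "padic_abs p 0 = 0" by (simp add: padic_abs_def)

lemma pa_eq0[simp]: "padic_abs p r = 0 \<longleftrightarrow> r = 0"
  by (metis pa_pos pa_zero less_irrefl)

lemma pa_mult: "padic_abs p (r * s) = padic_abs p r * padic_abs p s"
proof (cases "r = 0 \<or> s = 0")
  case False
  then show ?thesis using pval_mult[of r s] p0
    by (simp add: padic_abs_def powr_add[symmetric] algebra_simps)
qed auto

lemma pa_one[simp]: "padic_abs p 1 = 1"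
  using p0 by (simp add: padic_abs_def pval_def)

lemma pa_minus1: "padic_abs p (-1) = 1"
proof -
  have "padic_abs p (-1) * padic_abs p (-1) = 1" using pa_mult[of "-1" "-1"] by simp
  then have "(padic_abs p (-1) - 1) * (padic_abs p (-1) + 1) = 0" by (simp add: algebra_simps)
  moreover have "padic_abs p (-1) + 1 > 0" using pa_nonneg[of "-1"] by linarith
  ultimately show ?thesis by simp
qed

lemma pa_minus[simp]: "padic_abs p (- r) = padic_abs p r"
  using pa_mult[of "-1" r] pa_minus1 by simp

lemma pa_sym: "padic_abs p (r - s) = padic_abs p (s - r)"
  using pa_minus[of "r - s"] by simp

lemma pa_ultra: "padic_abs p (r + s) \<le> max (padic_abs p r) (padic_abs p s)"
proof (cases "r = 0 \<or> s = 0 \<or> r + s = 0")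
  case True
  then show ?thesis by (auto simp: le_max_iff_disj)
next
  case False
  then have ne: "r \<noteq> 0" "s \<noteq> 0" "r + s \<noteq> 0" by auto
  have m: "min (pval p r) (pval p s) \<le> pval p (r + s)" using pval_add ne by blast
  have pg: "real p \<ge> 1" using p_gt1 by simp
  show ?thesis
  proof (cases "pval p r \<le> pval p s")
    case True
    then have "pval p r \<le> pval p (r+s)" using m by simp
    then have "real p powr (- real_of_int (pval p (r+s))) \<le> real p powr (- real_of_int (pval p r))"
      by (intro powr_mono) (use pg in auto)
    then have "padic_abs p (r+s) \<le> padic_abs p r" by (simp only: pa_nz[OF ne(3)] pa_nz[OF ne(1)])
    then show ?thesis by (simp add: le_max_iff_disj)
  next
    case False
    then have "pval p s \<le> pval p (r+s)" using m by simp
    then have "real p powr (- real_of_int (pval p (r+s))) \<le> real p powr (- real_of_int (pval p s))"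
      by (intro powr_mono) (use pg in auto)
    then have "padic_abs p (r+s) \<le> padic_abs p s" by (simp only: pa_nz[OF ne(3)] pa_nz[OF ne(2)])
    then show ?thesis by (simp add: le_max_iff_disj)
  qed
qed

lemma pa_ultra_diff: "padic_abs p (r - s) \<le> max (padic_abs p r) (padic_abs p s)"
  using pa_ultra[of r "-s"] by simp

lemma pa_tri: "padic_abs p (r + s) \<le> padic_abs p r + padic_abs p s"
  using pa_ultra[of r s] pa_nonneg[of r] pa_nonneg[of s] by linarith

lemma pa_rev_tri: "\<bar>padic_abs p r - padic_abs p s\<bar> \<le> padic_abs p (r - s)"
proof -
  have "padic_abs p r \<le> padic_abs p s + padic_abs p (r - s)" using pa_tri[of s "r - s"] by simp
  moreover have "padic_abs p s \<le> padic_abs p r + padic_abs p (r - s)"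
    using pa_tri[of r "s - r"] pa_sym[of s r] by simp
  ultimately show ?thesis by linarith
qed

lemma pa_strict: "padic_abs p s < padic_abs p r \<Longrightarrow> padic_abs p (r + s) = padic_abs p r"
proof -
  assume a: "padic_abs p s < padic_abs p r"
  have "padic_abs p (r + s) \<le> padic_abs p r" using pa_ultra[of r s] a by simp
  moreover have "padic_abs p r \<le> max (padic_abs p (r + s)) (padic_abs p s)"
    using pa_ultra_diff[of "r+s" s] by simp
  ultimately show ?thesis using a by linarith
qed

lemma pa_divide: "padic_abs p (r / s) = padic_abs p r / padic_abs p s"
proof (cases "s = 0")
  case False
  have "padic_abs p r = padic_abs p (r / s) * padic_abs p s"
    using pa_mult[of "r/s" s] False by simp
  then show ?thesis using pa_pos[OF False] by (simp add: field_simps)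
qed simp

lemma pa_inverse: "padic_abs p (inverse r) = inverse (padic_abs p r)"
  using pa_divide[of 1 r] by (simp add: inverse_eq_divide)

lemma pa_of_int: "n \<noteq> 0 \<Longrightarrow> padic_abs p (of_int n) = real p powr (- real (multiplicity (int p) n))"
  using p0 by (simp add: padic_abs_def pval_def)

lemma pa_int_le1: "padic_abs p (of_int n) \<le> 1"
  using pw_le1 by (cases "n = 0") (auto simp: pa_of_int)

lemma pa_int_dvd: "int p ^ k dvd n \<Longrightarrow> padic_abs p (of_int n) \<le> real p powr (- real k)"
proof (cases "n = 0")
  case False
  assume "int p ^ k dvd n"
  then have "k \<le> multiplicity (int p) n" using multiplicity_geI[OF False ip_not_unit] by blast
  then show ?thesis using False p_gt1 by (simp add: pa_of_int)
qed (simp)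

lemma pa_int_ndvd: "\<not> int p dvd n \<Longrightarrow> padic_abs p (of_int n) = 1"
proof -
  assume a: "\<not> int p dvd n"
  then have "n \<noteq> 0" by auto
  moreover have "multiplicity (int p) n = 0" using a not_dvd_imp_multiplicity_0 by blast
  ultimately show ?thesis using p0 by (simp add: pa_of_int)
qed

lemma pa_p: "padic_abs p (of_nat p) = 1 / real p"
proof -
  have "padic_abs p (of_int (int p)) = real p powr (- 1)"
    using pa_of_int[of "int p"] ip_prime p_gt1 by simp
  then show ?thesis using p_gt1 by (simp add: powr_minus_divide)
qed

lemma pa_discrete: "padic_abs p r < 1 \<Longrightarrow> padic_abs p r \<le> 1 / real p"
proof (cases "r = 0")
  case False
  assume a: "padic_abs p r < 1"
  have pg: "real p > 1" using p_gt1 by simp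
  have "pval p r > 0"
  proof (rule ccontr)
    assume "\<not> pval p r > 0"
    then have "0 \<le> - real_of_int (pval p r)" by simp
    then have "1 \<le> real p powr (- real_of_int (pval p r))" using pg by (simp add: ge_one_powr_ge_zero)
    then show False using a False by (simp add: pa_nz)
  qed
  then have "- real_of_int (pval p r) \<le> - 1" by simp
  then have "real p powr (- real_of_int (pval p r)) \<le> real p powr (-1)"
    by (rule powr_mono) (use pg in auto)
  then show ?thesis using pg False by (simp add: pa_nz powr_minus_divide)
qed (simp add: p_gt1)

lemma pa_approx_int:
  assumes "padic_abs p r \<le> 1"
  shows "\<exists>n::int. padic_abs p (r - of_int n) \<le> real p powr (- real K)"
proof -
  obtain n0 d where nd: "quotient_of r = (n0, d)" by (cases "quotient_of r")
  have d: "d > 0" using quotient_of_denom_pos[OF nd] .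
  have r: "r = of_int n0 / of_int d" using quotient_of_div[OF nd] .
  have cop: "coprime n0 d" using quotient_of_coprime[OF nd] .
  have nd': "\<not> int p dvd d"
  proof
    assume pd: "int p dvd d"
    then have "\<not> int p dvd n0" using cop ip_not_unit
      by (meson coprime_common_divisor)
    then have "padic_abs p (of_int n0) = 1" by (rule pa_int_ndvd)
    moreover have "padic_abs p (of_int d) \<le> real p powr (- real 1)"
      using pa_int_dvd[of 1 d] pd by simp
    moreover have "padic_abs p (of_int d) > 0" using d pa_pos by simp
    moreover have "padic_abs p r = padic_abs p (of_int n0) / padic_abs p (of_int d)"
      using r by (simp add: pa_divide)
    moreover have "real p powr (- real 1) = 1 / real p" by (simp add: powr_minus_divide)
    ultimately have x: "real p * padic_abs p (of_int d) \<le> 1" "padic_abs p r = 1 / padic_abs p (of_int d)"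
      using p_gt1 by (auto simp: field_simps)
    have "padic_abs p (of_int d) < 1"
    proof (rule ccontr)
      assume "\<not> padic_abs p (of_int d) < 1"
      then have "1 * 1 < real p * padic_abs p (of_int d)"
        using p_gt1 by (intro mult_less_le_imp_less) auto
      then show False using x by simp
    qed
    then have "padic_abs p r > 1" using \<open>padic_abs p (of_int d) > 0\<close> x(2) by simp
    then show False using assms by simp
  qed
  have "coprime (int p) d" using ip_prime nd' by (rule prime_imp_coprime)
  then have "coprime d (int p ^ K)" by (simp add: coprime_commute)
  then obtain u v where uv: "u * d + v * int p ^ K = 1" using bezout_int[of d "int p ^ K"] by auto
  have e1: "(1::int) - u * d = v * int p ^ K" using uv by linarith
  have "r - of_int (n0 * u) = of_int n0 * (1 - of_int u * of_int d) / (of_int d :: rat)"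
    using d r by (simp add: field_simps)
  also have "(1::rat) - of_int u * of_int d = of_int (v * int p ^ K)"
    using e1 by (metis of_int_1 of_int_diff of_int_mult)
  finally have "r - of_int (n0 * u) = of_int (n0 * v * int p ^ K) / of_int d"
    by (simp add: mult.assoc)
  then have "padic_abs p (r - of_int (n0 * u)) = padic_abs p (of_int (n0 * v * int p ^ K))"
    using pa_int_ndvd[OF nd'] by (simp add: pa_divide)
  also have "\<dots> \<le> real p powr (- real K)"
    by (rule pa_int_dvd) simp
  finally show ?thesis by blast
qed

end


definition nlim :: "nat \<Rightarrow> (nat \<Rightarrow> rat) \<Rightarrow> real" where
  "nlim p X = lim (\<lambda>n. padic_abs p (X n))"

context
  fixes p :: nat
  assumes p: "prime p"
begin

lemma pc_conv:
  assumes "pcauchy p X"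
  shows "(\<lambda>n. padic_abs p (X n)) \<longlonglongrightarrow> nlim p X"
proof -
  have "Cauchy (\<lambda>n. padic_abs p (X n))"
    unfolding Cauchy_iff
  proof (intro allI impI)
    fix e :: real assume "e > 0"
    then obtain N where N: "\<forall>m\<ge>N. \<forall>n\<ge>N. padic_abs p (X m - X n) < e"
      using assms unfolding pcauchy_def by blast
    show "\<exists>M. \<forall>m\<ge>M. \<forall>n\<ge>M. norm (padic_abs p (X m) - padic_abs p (X n)) < e"
    proof (intro exI allI impI)
      fix m n assume "N \<le> m" "N \<le> n"
      then show "norm (padic_abs p (X m) - padic_abs p (X n)) < e"
        using N pa_rev_tri[OF p, of "X m" "X n"] by fastforce
    qed
  qed
  then show ?thesis unfolding nlim_def by (simp add: Cauchy_convergent_iff convergent_LIMSEQ_iff)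
qed

lemma pc_bounded:
  assumes "pcauchy p X"
  obtains B where "B > 0" "\<And>n. padic_abs p (X n) \<le> B"
proof -
  have "Bseq (\<lambda>n. padic_abs p (X n))"
    using pc_conv[OF assms] convergent_imp_Bseq convergentI by blast
  then obtain K where "K > 0" "\<forall>n. norm (padic_abs p (X n)) \<le> K" by (rule BseqE)
  then show ?thesis using that by (simp add: pa_nonneg[OF p])
qed

lemma pe_refl: "pequiv p X X"
  unfolding pequiv_def by (simp add: pa_zero[OF p])

lemma pe_sym: "pequiv p X Y \<Longrightarrow> pequiv p Y X"
  unfolding pequiv_def using pa_sym[OF p] by simp

lemma pe_trans:
  assumes "pequiv p X Y" "pequiv p Y Z"
  shows "pequiv p X Z"
  unfolding pequiv_def
proof (rule Lim_null_comparison)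
  show "\<forall>\<^sub>F n in sequentially. norm (padic_abs p (X n - Z n)) \<le> padic_abs p (X n - Y n) + padic_abs p (Y n - Z n)"
    using pa_tri[OF p] pa_nonneg[OF p] by (auto intro!: always_eventually)
      (metis add_diff_cancel_left' diff_add_cancel diff_diff_eq2)
  show "(\<lambda>n. padic_abs p (X n - Y n) + padic_abs p (Y n - Z n)) \<longlonglongrightarrow> 0"
    using assms unfolding pequiv_def by (intro tendsto_add_zero)
qed

lemma pc_const: "pcauchy p (\<lambda>n. c)"
  unfolding pcauchy_def by (simp add: pa_zero[OF p])

lemma pc_diff:
  assumes "pcauchy p X" "pcauchy p Y"
  shows "pcauchy p (\<lambda>n. X n - Y n)"
  unfolding pcauchy_def
proof (intro allI impI)
  fix e :: real assume "e > 0"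
  obtain N1 where N1: "\<forall>m\<ge>N1. \<forall>n\<ge>N1. padic_abs p (X m - X n) < e"
    using assms(1) \<open>e > 0\<close> unfolding pcauchy_def by blast
  obtain N2 where N2: "\<forall>m\<ge>N2. \<forall>n\<ge>N2. padic_abs p (Y m - Y n) < e"
    using assms(2) \<open>e > 0\<close> unfolding pcauchy_def by blast
  show "\<exists>N. \<forall>m\<ge>N. \<forall>n\<ge>N. padic_abs p (X m - Y m - (X n - Y n)) < e"
  proof (intro exI allI impI)
    fix m n assume "max N1 N2 \<le> m" "max N1 N2 \<le> n"
    then have "padic_abs p (X m - X n) < e" "padic_abs p (Y m - Y n) < e" using N1 N2 by auto
    then have "padic_abs p ((X m - X n) - (Y m - Y n)) < e"
      using pa_ultra_diff[OF p, of "X m - X n" "Y m - Y n"] by (meson le_less_trans max_less_iff_conj)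
    moreover have eq: "X m - Y m - (X n - Y n) = (X m - X n) - (Y m - Y n)" by simp
    ultimately show "padic_abs p (X m - Y m - (X n - Y n)) < e" by (simp only: eq)
  qed
qed

lemma pc_cmult:
  assumes "pcauchy p X"
  shows "pcauchy p (\<lambda>n. c * X n)"
proof (cases "c = 0")
  case True then show ?thesis using pc_const by simp
next
  case False
  have cp: "padic_abs p c > 0" using pa_pos[OF p False] .
  show ?thesis unfolding pcauchy_def
  proof (intro allI impI)
    fix e :: real assume "e > 0"
    then obtain N where N: "\<forall>m\<ge>N. \<forall>n\<ge>N. padic_abs p (X m - X n) < e / padic_abs p c"
      using assms cp unfolding pcauchy_def by (meson divide_pos_pos)
    show "\<exists>N. \<forall>m\<ge>N. \<forall>n\<ge>N. padic_abs p (c * X m - c * X n) < e"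
    proof (intro exI allI impI)
      fix m n assume "N \<le> m" "N \<le> n"
      then have "padic_abs p (X m - X n) < e / padic_abs p c" using N by auto
      then have "padic_abs p c * padic_abs p (X m - X n) < e" using cp by (simp add: field_simps)
      then show "padic_abs p (c * X m - c * X n) < e"
        by (simp add: pa_mult[OF p, symmetric] right_diff_distrib)
    qed
  qed
qed

lemma pc_neg: "pcauchy p X \<Longrightarrow> pcauchy p (\<lambda>n. - X n)"
  using pc_cmult[of X "-1"] by simp

lemma pc_add:
  assumes "pcauchy p X" "pcauchy p Y"
  shows "pcauchy p (\<lambda>n. X n + Y n)"
  using pc_diff[OF assms(1) pc_neg[OF assms(2)]] by simp

lemma pe_diff:
  assumes "pequiv p X X'" "pequiv p Y Y'"
  shows "pequiv p (\<lambda>n. X n - Y n) (\<lambda>n. X' n - Y' n)"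
  unfolding pequiv_def
proof (rule Lim_null_comparison)
  show "\<forall>\<^sub>F n in sequentially. norm (padic_abs p (X n - Y n - (X' n - Y' n))) \<le> padic_abs p (X n - X' n) + padic_abs p (Y n - Y' n)"
  proof (intro always_eventually allI)
    fix n
    have "X n - Y n - (X' n - Y' n) = (X n - X' n) - (Y n - Y' n)" by simp
    then have "padic_abs p (X n - Y n - (X' n - Y' n)) \<le> max (padic_abs p (X n - X' n)) (padic_abs p (Y n - Y' n))"
      using pa_ultra_diff[OF p, of "X n - X' n" "Y n - Y' n"] by (simp only:)
    then show "norm (padic_abs p (X n - Y n - (X' n - Y' n))) \<le> padic_abs p (X n - X' n) + padic_abs p (Y n - Y' n)"
      using pa_nonneg[OF p, of "X n - X' n"] pa_nonneg[OF p, of "Y n - Y' n"] pa_nonneg[OF p, of "X n - Y n - (X' n - Y' n)"]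
      by simp
  qed
  show "(\<lambda>n. padic_abs p (X n - X' n) + padic_abs p (Y n - Y' n)) \<longlonglongrightarrow> 0"
    using assms unfolding pequiv_def by (intro tendsto_add_zero)
qed

lemma pe_mult_right:
  assumes "pcauchy p B" "pequiv p Z W"
  shows "pequiv p (\<lambda>n. Z n * B n) (\<lambda>n. W n * B n)"
proof -
  obtain K where K: "K > 0" "\<And>n. padic_abs p (B n) \<le> K" using pc_bounded[OF assms(1)] by blast
  show ?thesis unfolding pequiv_def
  proof (rule Lim_null_comparison)
    show "\<forall>\<^sub>F n in sequentially. norm (padic_abs p (Z n * B n - W n * B n)) \<le> padic_abs p (Z n - W n) * K"
    proof (intro always_eventually allI)
      fix n
      have "padic_abs p (Z n * B n - W n * B n) = padic_abs p (Z n - W n) * padic_abs p (B n)"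
        by (simp add: pa_mult[OF p, symmetric] left_diff_distrib)
      also have "\<dots> \<le> padic_abs p (Z n - W n) * K"
        using K(2) pa_nonneg[OF p] by (intro mult_left_mono) auto
      finally show "norm (padic_abs p (Z n * B n - W n * B n)) \<le> padic_abs p (Z n - W n) * K"
        using pa_nonneg[OF p] by simp
    qed
    show "(\<lambda>n. padic_abs p (Z n - W n) * K) \<longlonglongrightarrow> 0"
      using assms(2) unfolding pequiv_def by (intro tendsto_mult_left_zero)
  qed
qed

lemma pe_mult_left:
  assumes "pcauchy p B" "pequiv p Z W"
  shows "pequiv p (\<lambda>n. B n * Z n) (\<lambda>n. B n * W n)"
  using pe_mult_right[OF assms] by (simp add: mult.commute)

lemma nlim_equiv:
  assumes "pcauchy p X" "pcauchy p Y" "pequiv p X Y"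
  shows "nlim p X = nlim p Y"
proof -
  have a: "(\<lambda>n. padic_abs p (X n) - padic_abs p (Y n)) \<longlonglongrightarrow> nlim p X - nlim p Y"
    using pc_conv[OF assms(1)] pc_conv[OF assms(2)] by (intro tendsto_diff)
  have b: "(\<lambda>n. padic_abs p (X n) - padic_abs p (Y n)) \<longlonglongrightarrow> 0"
  proof (rule Lim_null_comparison)
    show "\<forall>\<^sub>F n in sequentially. norm (padic_abs p (X n) - padic_abs p (Y n)) \<le> padic_abs p (X n - Y n)"
      using pa_rev_tri[OF p] by (auto intro!: always_eventually)
    show "(\<lambda>n. padic_abs p (X n - Y n)) \<longlonglongrightarrow> 0" using assms(3) unfolding pequiv_def .
  qed
  show ?thesis using LIMSEQ_unique[OF a b] by simp
qed

lemma nlim_nonneg: "pcauchy p X \<Longrightarrow> nlim p X \<ge> 0"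
  using LIMSEQ_le_const[OF pc_conv, of X 0] pa_nonneg[OF p] by auto

lemma nlim_cmult:
  assumes "pcauchy p X"
  shows "nlim p (\<lambda>n. c * X n) = padic_abs p c * nlim p X"
proof -
  have "(\<lambda>n. padic_abs p c * padic_abs p (X n)) \<longlonglongrightarrow> padic_abs p c * nlim p X"
    using pc_conv[OF assms] by (intro tendsto_mult_left)
  then show ?thesis unfolding nlim_def[of p "\<lambda>n. c * X n"] by (simp add: pa_mult[OF p] limI)
qed

lemma nlim_const: "nlim p (\<lambda>n. c) = padic_abs p c"
  unfolding nlim_def by (simp add: limI)

lemma nlim_ultra_diff:
  assumes "pcauchy p X" "pcauchy p Y"
  shows "nlim p (\<lambda>n. X n - Y n) \<le> max (nlim p X) (nlim p Y)"
proof (rule LIMSEQ_le)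
  show "(\<lambda>n. padic_abs p (X n - Y n)) \<longlonglongrightarrow> nlim p (\<lambda>n. X n - Y n)"
    using pc_conv[OF pc_diff[OF assms]] by simp
  show "(\<lambda>n. max (padic_abs p (X n)) (padic_abs p (Y n))) \<longlonglongrightarrow> max (nlim p X) (nlim p Y)"
    using pc_conv[OF assms(1)] pc_conv[OF assms(2)] by (intro tendsto_max)
  show "\<exists>N. \<forall>n\<ge>N. padic_abs p (X n - Y n) \<le> max (padic_abs p (X n)) (padic_abs p (Y n))"
    using pa_ultra_diff[OF p] by blast
qed

lemma nlim_ultra_add:
  assumes "pcauchy p X" "pcauchy p Y"
  shows "nlim p (\<lambda>n. X n + Y n) \<le> max (nlim p X) (nlim p Y)"
proof -
  have "nlim p (\<lambda>n. - Y n) = nlim p Y" using nlim_cmult[OF assms(2), of "-1"] pa_minus1[OF p] by simp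
  then show ?thesis using nlim_ultra_diff[OF assms(1) pc_neg[OF assms(2)]] by simp
qed

lemma nlim_zero_iff:
  assumes "pcauchy p X"
  shows "nlim p X = 0 \<longleftrightarrow> pequiv p X (\<lambda>n. 0)"
  using pc_conv[OF assms] LIMSEQ_unique unfolding pequiv_def by auto

lemma nlim_discrete:
  assumes "pcauchy p X" "nlim p X < 1"
  shows "nlim p X \<le> 1 / real p"
proof -
  have "eventually (\<lambda>n. padic_abs p (X n) < 1) sequentially"
    using order_tendstoD(2)[OF pc_conv[OF assms(1)] assms(2)] .
  then obtain N where "\<forall>n\<ge>N. padic_abs p (X n) < 1" unfolding eventually_sequentially by blast
  then have "\<forall>n\<ge>N. padic_abs p (X n) \<le> 1 / real p" using pa_discrete[OF p] by blast
  then show ?thesis using LIMSEQ_le_const2[OF pc_conv[OF assms(1)]] by blast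
qed

lemma nlim_density:
  assumes "pcauchy p X" "e > 0"
  shows "\<exists>r. nlim p (\<lambda>n. X n - r) < e"
proof -
  obtain N where N: "\<forall>m\<ge>N. \<forall>n\<ge>N. padic_abs p (X m - X n) < e / 2"
    using assms unfolding pcauchy_def by (meson half_gt_zero)
  have c: "pcauchy p (\<lambda>n. X n - X N)" using pc_diff[OF assms(1) pc_const] .
  have "\<forall>n\<ge>N. padic_abs p (X n - X N) \<le> e / 2" using N by (simp add: less_imp_le)
  then have "nlim p (\<lambda>n. X n - X N) \<le> e / 2" using LIMSEQ_le_const2[OF pc_conv[OF c]] by blast
  then show ?thesis using assms(2) by (intro exI[of _ "X N"]) simp
qed

lemma nlim_inverse:
  assumes "pcauchy p X" "nlim p X \<noteq> 0"
  shows "pcauchy p (\<lambda>n. inverse (X n))" "nlim p (\<lambda>n. inverse (X n)) = inverse (nlim p X)"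
    "pequiv p (\<lambda>n. X n * inverse (X n)) (\<lambda>n. 1)"
proof -
  define L where "L = nlim p X"
  have L: "L > 0" using nlim_nonneg[OF assms(1)] assms(2) unfolding L_def by simp
  have "eventually (\<lambda>n. L / 2 < padic_abs p (X n)) sequentially"
    using order_tendstoD(1)[OF pc_conv[OF assms(1)], of "L/2"] L unfolding L_def by simp
  then obtain N0 where N0: "\<forall>n\<ge>N0. L / 2 < padic_abs p (X n)" unfolding eventually_sequentially by blast
  then have nz: "\<forall>n\<ge>N0. X n \<noteq> 0" using L by (metis pa_zero[OF p] half_gt_zero less_asym)
  show "pcauchy p (\<lambda>n. inverse (X n))" unfolding pcauchy_def
  proof (intro allI impI)
    fix e :: real assume e: "e > 0"
    have "e * (L/2) * (L/2) > 0" using e L by simp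
    then obtain N1 where N1: "\<forall>m\<ge>N1. \<forall>n\<ge>N1. padic_abs p (X m - X n) < e * (L/2) * (L/2)"
      using assms(1) unfolding pcauchy_def by blast
    show "\<exists>N. \<forall>m\<ge>N. \<forall>n\<ge>N. padic_abs p (inverse (X m) - inverse (X n)) < e"
    proof (intro exI allI impI)
      fix m n assume mn: "max N0 N1 \<le> m" "max N0 N1 \<le> n"
      have xm: "X m \<noteq> 0" "X n \<noteq> 0" using nz mn by auto
      have "inverse (X m) - inverse (X n) = (X n - X m) / (X m * X n)"
        using xm by (simp add: field_simps)
      then have eq: "padic_abs p (inverse (X m) - inverse (X n)) = padic_abs p (X m - X n) / (padic_abs p (X m) * padic_abs p (X n))"
        by (simp add: pa_divide[OF p] pa_mult[OF p] pa_sym[OF p, of "X n"])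
      have a: "padic_abs p (X m - X n) < e * (L/2) * (L/2)" using N1 mn by auto
      have b: "L/2 < padic_abs p (X m)" "L/2 < padic_abs p (X n)" using N0 mn by auto
      have "(L/2) * (L/2) < padic_abs p (X m) * padic_abs p (X n)"
        using b L by (intro mult_strict_mono) auto
      then have "e * (L/2) * (L/2) < e * (padic_abs p (X m) * padic_abs p (X n))"
        using e by simp
      then have "padic_abs p (X m - X n) < e * (padic_abs p (X m) * padic_abs p (X n))" using a by simp
      moreover have "padic_abs p (X m) * padic_abs p (X n) > 0" using b L
        by (metis half_gt_zero less_trans mult_pos_pos)
      ultimately show "padic_abs p (inverse (X m) - inverse (X n)) < e"
        unfolding eq by (simp add: divide_less_eq)
    qed
  qed
  have "(\<lambda>n. inverse (padic_abs p (X n))) \<longlonglongrightarrow> inverse L"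
    using pc_conv[OF assms(1)] assms(2) unfolding L_def by (intro tendsto_inverse) auto
  then show "nlim p (\<lambda>n. inverse (X n)) = inverse (nlim p X)"
    unfolding nlim_def[of p "\<lambda>n. inverse (X n)"] L_def by (simp add: pa_inverse[OF p] limI)
  have "eventually (\<lambda>n. padic_abs p (X n * inverse (X n) - 1) = 0) sequentially"
    using nz unfolding eventually_sequentially by (metis right_inverse diff_self pa_zero[OF p])
  then show "pequiv p (\<lambda>n. X n * inverse (X n)) (\<lambda>n. 1)"
    unfolding pequiv_def by (simp add: tendsto_cong)
qed

lemma pclass_mem: "pcauchy p X \<Longrightarrow> X \<in> pclass p X"
  unfolding pclass_def using pe_refl by simp

lemma pclass_eq: "pequiv p X Y \<Longrightarrow> pclass p X = pclass p Y"
  unfolding pclass_def using pe_sym pe_trans by blast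

lemma pclass_eq_iff:
  assumes "pcauchy p X" "pcauchy p Y"
  shows "pclass p X = pclass p Y \<longleftrightarrow> pequiv p X Y"
proof
  assume "pclass p X = pclass p Y"
  then have "Y \<in> pclass p X" using pclass_mem[OF assms(2)] by simp
  then show "pequiv p X Y" unfolding pclass_def by simp
qed (rule pclass_eq)

lemma prep_class:
  assumes "pcauchy p X"
  shows "pcauchy p (prep (pclass p X))" "pequiv p X (prep (pclass p X))"
proof -
  have "prep (pclass p X) \<in> pclass p X"
    unfolding prep_def by (rule someI[of "\<lambda>Y. Y \<in> pclass p X", OF pclass_mem[OF assms]])
  then show "pcauchy p (prep (pclass p X))" "pequiv p X (prep (pclass p X))"
    unfolding pclass_def by auto
qed

lemma Qp_rep:
  assumes "x \<in> Qp p"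
  shows "pcauchy p (prep x)" "x = pclass p (prep x)"
proof -
  obtain X where X: "pcauchy p X" "x = pclass p X" using assms unfolding Qp_def by blast
  show "pcauchy p (prep x)" using prep_class(1)[OF X(1)] unfolding X(2) .
  show "x = pclass p (prep x)" unfolding X(2) by (rule pclass_eq[OF prep_class(2)[OF X(1)]])
qed

lemma pclass_Qp: "pcauchy p X \<Longrightarrow> pclass p X \<in> Qp p"
  unfolding Qp_def by blast

lemma pof_rat_Qp: "pof_rat p q \<in> Qp p"
  unfolding pof_rat_def by (rule pclass_Qp[OF pc_const])

lemma pmul_class:
  assumes "pcauchy p X" "pcauchy p Y"
  shows "pmul p (pclass p X) (pclass p Y) = pclass p (\<lambda>n. X n * Y n)"
proof -
  let ?A = "prep (pclass p X)" and ?B = "prep (pclass p Y)"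
  have "pequiv p (\<lambda>n. ?A n * ?B n) (\<lambda>n. X n * ?B n)"
    using pe_mult_right[OF prep_class(1)[OF assms(2)] pe_sym[OF prep_class(2)[OF assms(1)]]] .
  moreover have "pequiv p (\<lambda>n. X n * ?B n) (\<lambda>n. X n * Y n)"
    using pe_mult_left[OF assms(1) pe_sym[OF prep_class(2)[OF assms(2)]]] .
  ultimately show ?thesis unfolding pmul_def using pclass_eq pe_trans by blast
qed

lemma pdist_class:
  assumes "pcauchy p X" "pcauchy p Y"
  shows "pdist p (pclass p X) (pclass p Y) = nlim p (\<lambda>n. X n - Y n)"
proof -
  let ?A = "prep (pclass p X)" and ?B = "prep (pclass p Y)"
  have "pdist p (pclass p X) (pclass p Y) = nlim p (\<lambda>n. ?A n - ?B n)"
    unfolding pdist_def nlim_def ..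
  also have "\<dots> = nlim p (\<lambda>n. X n - Y n)"
    using pc_diff[OF prep_class(1)[OF assms(1)] prep_class(1)[OF assms(2)]] pc_diff[OF assms]
      pe_diff[OF pe_sym[OF prep_class(2)[OF assms(1)]] pe_sym[OF prep_class(2)[OF assms(2)]]]
    by (rule nlim_equiv)
  finally show ?thesis .
qed

lemma pnorm_class:
  assumes "pcauchy p X"
  shows "pdist p (pclass p X) (pof_rat p 0) = nlim p X"
  using pdist_class[OF assms pc_const] unfolding pof_rat_def by simp

lemma pclass_zero_iff:
  assumes "pcauchy p X"
  shows "pclass p X = pof_rat p 0 \<longleftrightarrow> nlim p X = 0"
  unfolding pof_rat_def using pclass_eq_iff[OF assms pc_const] nlim_zero_iff[OF assms] by simp

lemma pmul_rat_class:
  assumes "pcauchy p X"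
  shows "pmul p (pof_rat p q) (pclass p X) = pclass p (\<lambda>n. q * X n)"
  unfolding pof_rat_def using pmul_class[OF pc_const assms] .

end


context
  fixes p :: nat
  assumes p: "prime p"
begin

lemmas pa_simps[simp] = pa_zero[OF p] pa_nonneg[OF p] pa_eq0[OF p]

abbreviation pn where "pn x \<equiv> pdist p x (pof_rat p 0)"

lemma pn_rep: "x \<in> Qp p \<Longrightarrow> pn x = nlim p (prep x)"
  using pnorm_class[OF p Qp_rep(1)[OF p]] Qp_rep(2)[OF p] by metis

lemma pn_nonneg: "x \<in> Qp p \<Longrightarrow> pn x \<ge> 0"
  using pn_rep nlim_nonneg[OF p Qp_rep(1)[OF p]] by simp

lemma pn_zero_iff: "x \<in> Qp p \<Longrightarrow> pn x = 0 \<longleftrightarrow> x = pof_rat p 0"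
  using pn_rep pclass_zero_iff[OF p Qp_rep(1)[OF p]] Qp_rep(2)[OF p] by metis

lemma Zp_sub: "Zp p \<subseteq> Qp p" unfolding Zp_def by auto

lemma open_Qp: "padic_open p (Qp p)"
  unfolding padic_open_def by (auto intro: exI[of _ 1])

lemma open_Zp: "padic_open p (Zp p)"
  unfolding padic_open_def
proof (intro conjI Zp_sub ballI)
  fix x assume x: "x \<in> Zp p"
  then have xq: "x \<in> Qp p" and xn: "pn x \<le> 1" unfolding Zp_def by auto
  show "\<exists>e>0. \<forall>y\<in>Qp p. pdist p x y < e \<longrightarrow> y \<in> Zp p"
  proof (intro exI[of _ 1] conjI ballI impI)
    show "(0::real) < 1" by simp
    fix y assume yq: "y \<in> Qp p" and d: "pdist p x y < 1"
    let ?X = "prep x" and ?Y = "prep y"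
    have cx: "pcauchy p ?X" and cy: "pcauchy p ?Y" using Qp_rep[OF p] xq yq by auto
    have d': "nlim p (\<lambda>n. ?X n - ?Y n) < 1"
      using d pdist_class[OF p cx cy] Qp_rep(2)[OF p xq] Qp_rep(2)[OF p yq] by metis
    have "nlim p (\<lambda>n. ?X n - (?X n - ?Y n)) \<le> max (nlim p ?X) (nlim p (\<lambda>n. ?X n - ?Y n))"
      using nlim_ultra_diff[OF p cx pc_diff[OF p cx cy]] .
    moreover have "(\<lambda>n. ?X n - (?X n - ?Y n)) = ?Y" by auto
    ultimately have "nlim p ?Y \<le> 1" using d' xn pn_rep[OF xq] by simp
    then show "y \<in> Zp p" unfolding Zp_def using yq pn_rep[OF yq] by simp
  qed
qed

lemma open_nz: "padic_open p {y \<in> Qp p. y \<noteq> pof_rat p 0}"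
  unfolding padic_open_def
proof (intro conjI ballI)
  show "{y \<in> Qp p. y \<noteq> pof_rat p 0} \<subseteq> Qp p" by auto
  fix x assume x: "x \<in> {y \<in> Qp p. y \<noteq> pof_rat p 0}"
  then have xq: "x \<in> Qp p" and xn: "pn x > 0" using pn_nonneg pn_zero_iff
    by (auto simp: order_less_le)
  show "\<exists>e>0. \<forall>y\<in>Qp p. pdist p x y < e \<longrightarrow> y \<in> {y \<in> Qp p. y \<noteq> pof_rat p 0}"
  proof (intro exI[of _ "pn x"] conjI ballI impI)
    show "pn x > 0" by fact
    fix y assume yq: "y \<in> Qp p" and d: "pdist p x y < pn x"
    let ?X = "prep x" and ?Y = "prep y"
    have cx: "pcauchy p ?X" and cy: "pcauchy p ?Y" using Qp_rep[OF p] xq yq by auto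
    have d': "nlim p (\<lambda>n. ?X n - ?Y n) < nlim p ?X"
      using d pdist_class[OF p cx cy] Qp_rep(2)[OF p xq] Qp_rep(2)[OF p yq] pn_rep[OF xq] by metis
    have "nlim p (\<lambda>n. (?X n - ?Y n) + ?Y n) \<le> max (nlim p (\<lambda>n. ?X n - ?Y n)) (nlim p ?Y)"
      using nlim_ultra_add[OF p pc_diff[OF p cx cy] cy] .
    moreover have "(\<lambda>n. (?X n - ?Y n) + ?Y n) = ?X" by auto
    ultimately have "nlim p ?X \<le> max (nlim p (\<lambda>n. ?X n - ?Y n)) (nlim p ?Y)" by simp
    then have "nlim p ?X \<le> nlim p ?Y" using d' by (auto simp: le_max_iff_disj)
    then have "nlim p ?Y > 0" using xn pn_rep[OF xq] by simp
    then show "y \<in> {y \<in> Qp p. y \<noteq> pof_rat p 0}" using yq pn_rep[OF yq] pn_zero_iff[OF yq] by auto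
  qed
qed

lemma open_Int: "padic_open p U \<Longrightarrow> padic_open p U' \<Longrightarrow> padic_open p (U \<inter> U')"
  unfolding padic_open_def
proof (intro conjI ballI)
  assume a: "U \<subseteq> Qp p \<and> (\<forall>x\<in>U. \<exists>e>0. \<forall>y\<in>Qp p. pdist p x y < e \<longrightarrow> y \<in> U)"
     and b: "U' \<subseteq> Qp p \<and> (\<forall>x\<in>U'. \<exists>e>0. \<forall>y\<in>Qp p. pdist p x y < e \<longrightarrow> y \<in> U')"
  show "U \<inter> U' \<subseteq> Qp p" using a by auto
  fix x assume "x \<in> U \<inter> U'"
  then obtain e e' where "e > 0" "\<forall>y\<in>Qp p. pdist p x y < e \<longrightarrow> y \<in> U"
    "e' > 0" "\<forall>y\<in>Qp p. pdist p x y < e' \<longrightarrow> y \<in> U'" using a b by blast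
  then show "\<exists>e>0. \<forall>y\<in>Qp p. pdist p x y < e \<longrightarrow> y \<in> U \<inter> U'"
    by (intro exI[of _ "min e e'"]) auto
qed

lemma pmul_rat_rep:
  assumes "x \<in> Qp p"
  shows "pmul p (pof_rat p q) x = pclass p (\<lambda>n. q * prep x n)"
  using pmul_rat_class[OF p Qp_rep(1)[OF p assms]] Qp_rep(2)[OF p assms] by metis

lemma pmul_rat_Qp: "x \<in> Qp p \<Longrightarrow> pmul p (pof_rat p q) x \<in> Qp p"
  using pmul_rat_rep pclass_Qp[OF p pc_cmult[OF p Qp_rep(1)[OF p]]] by metis

lemma pmul_rat_pn: "x \<in> Qp p \<Longrightarrow> pn (pmul p (pof_rat p q) x) = padic_abs p q * pn x"
  using pmul_rat_rep pnorm_class[OF p pc_cmult[OF p Qp_rep(1)[OF p]]]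
    nlim_cmult[OF p Qp_rep(1)[OF p]] pn_rep by metis

lemma pmul_rat_zero: "pmul p (pof_rat p q) (pof_rat p 0) = pof_rat p 0"
  using pmul_rat_class[OF p pc_const[OF p], of q 0] unfolding pof_rat_def by simp

lemma approx_local:
  assumes xq: "x \<in> Qp p" and yq: "y \<in> Qp p" and xnz: "x \<noteq> pof_rat p 0" and e: "e > 0"
  shows "\<exists>c \<eta>. \<eta> > 0 \<and> (\<forall>q. padic_abs p (q - c) < \<eta> \<longrightarrow> pdist p y (pmul p (pof_rat p q) x) < e)"
proof -
  let ?X = "prep x" and ?Y = "prep y"
  have cx: "pcauchy p ?X" and cy: "pcauchy p ?Y" using Qp_rep[OF p] xq yq by auto
  define L where "L = nlim p ?X"
  have L: "L > 0" unfolding L_def using pn_rep[OF xq] pn_zero_iff[OF xq] xnz pn_nonneg[OF xq]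
    by (metis order_less_le)
  obtain \<beta> where \<beta>: "nlim p (\<lambda>n. ?Y n - \<beta>) < e" using nlim_density[OF p cy e] by blast
  define \<delta> where "\<delta> = min L (e * L / (padic_abs p \<beta> + 1))"
  have "padic_abs p \<beta> + 1 > 0" using pa_nonneg[OF p, of \<beta>] by linarith
  then have \<delta>: "\<delta> > 0" unfolding \<delta>_def using L e by simp
  obtain \<alpha> where \<alpha>: "nlim p (\<lambda>n. ?X n - \<alpha>) < \<delta>" using nlim_density[OF p cx \<delta>] by blast
  have cxa: "pcauchy p (\<lambda>n. ?X n - \<alpha>)" using pc_diff[OF p cx pc_const[OF p]] .
  have "nlim p (\<lambda>n. (?X n - \<alpha>) + \<alpha>) \<le> max (nlim p (\<lambda>n. ?X n - \<alpha>)) (nlim p (\<lambda>n. \<alpha>))"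
    using nlim_ultra_add[OF p cxa pc_const[OF p]] .
  then have "L \<le> max (nlim p (\<lambda>n. ?X n - \<alpha>)) (padic_abs p \<alpha>)"
    unfolding L_def by (simp add: nlim_const[OF p])
  moreover have "nlim p (\<lambda>n. ?X n - \<alpha>) < L" using \<alpha> unfolding \<delta>_def by simp
  ultimately have a1: "L \<le> padic_abs p \<alpha>" by (simp add: le_max_iff_disj)
  have "nlim p (\<lambda>n. ?X n - (?X n - \<alpha>)) \<le> max (nlim p ?X) (nlim p (\<lambda>n. ?X n - \<alpha>))"
    using nlim_ultra_diff[OF p cx cxa] .
  then have "padic_abs p \<alpha> \<le> max L (nlim p (\<lambda>n. ?X n - \<alpha>))"
    unfolding L_def by (simp add: nlim_const[OF p])
  then have pa\<alpha>: "padic_abs p \<alpha> = L" using a1 \<open>nlim p (\<lambda>n. ?X n - \<alpha>) < L\<close> by simp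
  then have \<alpha>0: "\<alpha> \<noteq> 0" using L by auto
  define c where "c = \<beta> / \<alpha>"
  have ca: "c * \<alpha> = \<beta>" unfolding c_def using \<alpha>0 by simp
  have pac: "padic_abs p c = padic_abs p \<beta> / L" unfolding c_def using pa\<alpha> by (simp add: pa_divide[OF p])
  show ?thesis
  proof (intro exI[of _ c] exI[of _ "e / L"] conjI allI impI)
    show "e / L > 0" using e L by simp
    fix q assume q: "padic_abs p (q - c) < e / L"
    have "pdist p y (pmul p (pof_rat p q) x) = pdist p (pclass p ?Y) (pclass p (\<lambda>n. q * ?X n))"
      using pmul_rat_rep[OF xq] Qp_rep(2)[OF p yq] by metis
    also have "\<dots> = nlim p (\<lambda>n. ?Y n - q * ?X n)"
      using pdist_class[OF p cy pc_cmult[OF p cx]] .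
    also have "(\<lambda>n. ?Y n - q * ?X n) = (\<lambda>n. (?Y n - \<beta>) - ((q - c) * ?X n + c * (?X n - \<alpha>)))"
      using ca by (auto simp: algebra_simps)
    finally have eq: "pdist p y (pmul p (pof_rat p q) x) = nlim p (\<lambda>n. (?Y n - \<beta>) - ((q - c) * ?X n + c * (?X n - \<alpha>)))" .
    have c1: "pcauchy p (\<lambda>n. ?Y n - \<beta>)" using pc_diff[OF p cy pc_const[OF p]] .
    have c2: "pcauchy p (\<lambda>n. (q - c) * ?X n)" using pc_cmult[OF p cx] .
    have c3: "pcauchy p (\<lambda>n. c * (?X n - \<alpha>))" using pc_cmult[OF p cxa] .
    have n2: "nlim p (\<lambda>n. (q - c) * ?X n) < e"
    proof -
      have "nlim p (\<lambda>n. (q - c) * ?X n) = padic_abs p (q - c) * L"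
        unfolding L_def using nlim_cmult[OF p cx] .
      also have "\<dots> < e / L * L" using q L by (intro mult_strict_right_mono) auto
      finally show ?thesis using L by simp
    qed
    have n3: "nlim p (\<lambda>n. c * (?X n - \<alpha>)) < e"
    proof -
      have "nlim p (\<lambda>n. c * (?X n - \<alpha>)) = padic_abs p c * nlim p (\<lambda>n. ?X n - \<alpha>)"
        using nlim_cmult[OF p cxa] .
      also have "\<dots> \<le> padic_abs p c * (e * L / (padic_abs p \<beta> + 1))"
        using \<alpha> pa_nonneg[OF p, of c] unfolding \<delta>_def by (intro mult_left_mono) auto
      also have "\<dots> = e * (padic_abs p \<beta> / (padic_abs p \<beta> + 1))"
        unfolding pac using L by (simp add: field_simps)
      also have "\<dots> < e * 1"
      proof (intro mult_strict_left_mono e)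
        have "padic_abs p \<beta> + 1 > 0" using pa_nonneg[OF p, of \<beta>] by linarith
        then show "padic_abs p \<beta> / (padic_abs p \<beta> + 1) < 1" by (simp add: divide_less_eq)
      qed
      finally show ?thesis by simp
    qed
    have "nlim p (\<lambda>n. (q - c) * ?X n + c * (?X n - \<alpha>)) \<le> max (nlim p (\<lambda>n. (q - c) * ?X n)) (nlim p (\<lambda>n. c * (?X n - \<alpha>)))"
      using nlim_ultra_add[OF p c2 c3] .
    then have n23: "nlim p (\<lambda>n. (q - c) * ?X n + c * (?X n - \<alpha>)) < e" using n2 n3 by simp
    have "nlim p (\<lambda>n. (?Y n - \<beta>) - ((q - c) * ?X n + c * (?X n - \<alpha>))) \<le> max (nlim p (\<lambda>n. ?Y n - \<beta>)) (nlim p (\<lambda>n. (q - c) * ?X n + c * (?X n - \<alpha>)))"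
      using nlim_ultra_diff[OF p c1 pc_add[OF p c2 c3]] .
    then show "pdist p y (pmul p (pof_rat p q) x) < e" unfolding eq using \<beta> n23 by simp
  qed
qed

lemma pinv_exists:
  assumes xq: "x \<in> Qp p" and xnz: "x \<noteq> pof_rat p 0"
  shows "\<exists>y. y \<in> Qp p \<and> pmul p x y = pof_rat p 1 \<and> pn y = inverse (pn x)"
proof -
  let ?X = "prep x"
  have cx: "pcauchy p ?X" using Qp_rep[OF p xq] by auto
  have nz: "nlim p ?X \<noteq> 0" using pn_rep[OF xq] pn_zero_iff[OF xq] xnz by simp
  note I = nlim_inverse[OF p cx nz]
  show ?thesis
  proof (intro exI[of _ "pclass p (\<lambda>n. inverse (?X n))"] conjI)
    show "pclass p (\<lambda>n. inverse (?X n)) \<in> Qp p" using pclass_Qp[OF p I(1)] .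
    have "pmul p x (pclass p (\<lambda>n. inverse (?X n))) = pclass p (\<lambda>n. ?X n * inverse (?X n))"
      using pmul_class[OF p cx I(1)] Qp_rep(2)[OF p xq] by metis
    also have "\<dots> = pclass p (\<lambda>n. 1)" using pclass_eq[OF p I(3)] .
    finally show "pmul p x (pclass p (\<lambda>n. inverse (?X n))) = pof_rat p 1" unfolding pof_rat_def .
    show "pn (pclass p (\<lambda>n. inverse (?X n))) = inverse (pn x)"
      using pnorm_class[OF p I(1)] I(2) pn_rep[OF xq] by simp
  qed
qed

end


lemma pa_nat_ndvd: "prime p \<Longrightarrow> \<not> p dvd D \<Longrightarrow> padic_abs p (of_nat D) = 1"
  using pa_int_ndvd[of p "int D"] by simp

lemma pa_nat_le1: "prime p \<Longrightarrow> padic_abs p (of_nat D) \<le> 1"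
  using pa_int_le1[of p "int D"] by simp

lemma pa_nat_dvd:
  assumes "prime p" "p ^ k dvd D"
  shows "padic_abs p (of_nat D) \<le> real p powr (- real k)"
proof -
  have "int (p ^ k) dvd int D" using assms(2) by (simp only: of_nat_dvd_iff)
  then have "int p ^ k dvd int D" by simp
  then show ?thesis using pa_int_dvd[OF assms(1), of k "int D"] by simp
qed

lemma near_int:
  fixes M :: int and x :: real
  assumes M: "M > 0"
  shows "\<exists>m. M dvd (m - m0) \<and> m \<noteq> 0 \<and> \<bar>real_of_int m - x\<bar> \<le> 2 * real_of_int M"
proof -
  define j where "j = floor ((x - m0) / M)"
  define m1 where "m1 = m0 + M * j"
  have j1: "real_of_int j \<le> (x - m0) / M" unfolding j_def by simp
  have j2: "(x - m0) / M < real_of_int j + 1" unfolding j_def by linarith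
  have Mr: "real_of_int M > 0" using M by simp
  have a: "real_of_int m1 \<le> x"
  proof -
    have "real_of_int M * real_of_int j \<le> x - m0" using j1 Mr by (simp add: field_simps)
    then show ?thesis unfolding m1_def by simp
  qed
  have b: "x < real_of_int m1 + M"
  proof -
    have "x - m0 < real_of_int M * (real_of_int j + 1)" using j2 Mr by (simp add: field_simps)
    then show ?thesis unfolding m1_def by (simp add: algebra_simps)
  qed
  have d1: "M dvd (m1 - m0)" unfolding m1_def by simp
  have d2: "M dvd (m1 + M - m0)"
  proof -
    have "m1 + M - m0 = M * (j + 1)" unfolding m1_def by (simp add: algebra_simps)
    then show ?thesis by simp
  qed
  have e1: "\<bar>real_of_int m1 - x\<bar> \<le> 2 * real_of_int M" using a b Mr by linarith
  have e2: "\<bar>real_of_int (m1 + M) - x\<bar> \<le> 2 * real_of_int M" using a b Mr by simp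
  show ?thesis
  proof (cases "m1 = 0")
    case False
    then show ?thesis using d1 e1 by blast
  next
    case True
    then have "m1 + M \<noteq> 0" using M by simp
    then show ?thesis using d2 e2 by blast
  qed
qed

lemma nt_approx:
  fixes G :: "nat set" and c :: "nat \<Rightarrow> rat" and \<eta> :: "nat \<Rightarrow> real"
  assumes fin: "finite G" and pr: "\<forall>p\<in>G. prime p" and eta: "\<forall>p\<in>G. \<eta> p > 0"
  shows "\<exists>M::real. \<forall>D::nat. D > 0 \<longrightarrow> (\<forall>p\<in>G. \<not> p dvd D) \<longrightarrow> (\<forall>t::real. \<exists>q::rat. q \<noteq> 0 \<and>
           (\<forall>p\<in>G. padic_abs p (q - c p) < \<eta> p) \<and>
           (\<forall>p. prime p \<longrightarrow> p \<notin> G \<longrightarrow> padic_abs p q * padic_abs p (of_nat D) \<le> 1) \<and>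
           \<bar>real_of_rat q - t\<bar> \<le> M / real D)"
proof -
  have "\<forall>p\<in>G. \<exists>k::nat. padic_abs p (c p) < real p ^ k"
  proof
    fix p assume "p \<in> G"
    then have "real p > 1" using pr prime_gt_1_nat by simp
    then show "\<exists>k::nat. padic_abs p (c p) < real p ^ k" by (rule real_arch_pow)
  qed
  then obtain k where k: "\<forall>p\<in>G. padic_abs p (c p) < real p ^ k p" by metis
  define P where "P = (\<Prod>p\<in>G. p ^ k p)"
  have P0: "P > 0" unfolding P_def using pr by (simp add: prime_gt_0_nat prod_pos)
  have PG: "\<forall>p\<in>G. padic_abs p (of_nat P) \<le> real p powr (- real (k p))"
  proof
    fix p assume pG: "p \<in> G"
    have "p ^ k p dvd P" unfolding P_def by (rule dvd_prodI[OF fin pG])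
    then show "padic_abs p (of_nat P) \<le> real p powr (- real (k p))" using pa_nat_dvd pr pG by blast
  qed
  have Ppos: "\<forall>p\<in>G. padic_abs p (of_nat P) > 0"
  proof
    fix p assume pG: "p \<in> G"
    have "(of_nat P :: rat) \<noteq> 0" using P0 by simp
    then show "padic_abs p (of_nat P) > 0" using pa_pos[of p "of_nat P"] pr pG by blast
  qed
  have Pout: "\<forall>p. prime p \<longrightarrow> p \<notin> G \<longrightarrow> padic_abs p (of_nat P) = 1"
  proof (intro allI impI)
    fix p assume pp: "prime p" "p \<notin> G"
    have "\<not> p dvd P"
    proof
      assume "p dvd P"
      then have "\<exists>x\<in>G. p dvd x ^ k x" unfolding P_def by (simp only: prime_dvd_prod_iff[OF fin pp(1)])
      then obtain x where x: "x \<in> G" "p dvd x ^ k x" by blast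
      have "p dvd x" using prime_dvd_power[OF pp(1) x(2)] .
      moreover have "prime x" using pr x(1) by blast
      ultimately have "p = x" using primes_dvd_imp_eq[OF pp(1)] by blast
      then show False using pp x by simp
    qed
    then show "padic_abs p (of_nat P) = 1" using pa_nat_ndvd pp by blast
  qed
  have "\<forall>p\<in>G. \<exists>K::nat. 1 / (\<eta> p * padic_abs p (of_nat P)) < real p ^ K"
  proof
    fix p assume "p \<in> G"
    then have "real p > 1" using pr prime_gt_1_nat by simp
    then show "\<exists>K::nat. 1 / (\<eta> p * padic_abs p (of_nat P)) < real p ^ K" by (rule real_arch_pow)
  qed
  then obtain K where K: "\<forall>p\<in>G. 1 / (\<eta> p * padic_abs p (of_nat P)) < real p ^ K p" by metis
  have Kp: "\<forall>p\<in>G. real p powr (- real (K p)) < \<eta> p * padic_abs p (of_nat P)"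
  proof
    fix p assume pG: "p \<in> G"
    have pos: "\<eta> p * padic_abs p (of_nat P) > 0" using eta Ppos pG by simp
    have pp: "real p > 0" using pr pG prime_gt_0_nat by simp
    have "real p powr (- real (K p)) = 1 / real p ^ K p"
      using pp by (simp add: powr_minus_divide powr_realpow)
    also have "\<dots> < \<eta> p * padic_abs p (of_nat P)"
      using K pG pos pp by (simp add: divide_less_eq mult.commute)
    finally show "real p powr (- real (K p)) < \<eta> p * padic_abs p (of_nat P)" .
  qed
  define Mm where "Mm = (\<Prod>p\<in>G. p ^ K p)"
  have Mm0: "Mm > 0" unfolding Mm_def using pr by (simp add: prime_gt_0_nat prod_pos)
  have Mmdvd: "\<forall>p\<in>G. p ^ K p dvd Mm"
  proof
    fix p assume pG: "p \<in> G"
    show "p ^ K p dvd Mm" unfolding Mm_def by (rule dvd_prodI[OF fin pG])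
  qed
  show ?thesis
  proof (intro exI[of _ "2 * real Mm"] allI impI)
    fix D :: nat and t :: real assume D0: "D > 0" and cop: "\<forall>p\<in>G. \<not> p dvd D"
    have PaD: "\<forall>p\<in>G. padic_abs p (of_nat D) = 1" using pa_nat_ndvd pr cop by blast
    define r where "r p = of_nat P * of_nat D * c p" for p
    have r1: "\<forall>p\<in>G. padic_abs p (r p) \<le> 1"
    proof
      fix p assume pG: "p \<in> G"
      have pp: "real p > 0" using pr pG prime_gt_0_nat by simp
      have "padic_abs p (r p) = padic_abs p (of_nat P) * padic_abs p (c p)"
        unfolding r_def using pr pG PaD by (simp add: pa_mult)
      also have "\<dots> \<le> real p powr (- real (k p)) * real p ^ k p"
        using PG pG k pa_nonneg pr by (intro mult_mono) (auto simp: less_imp_le)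
      also have "\<dots> = 1" using pp by (simp add: powr_minus_divide powr_realpow)
      finally show "padic_abs p (r p) \<le> 1" .
    qed
    have "\<forall>p\<in>G. \<exists>n::int. padic_abs p (r p - of_int n) \<le> real p powr (- real (K p))"
      using r1 pr pa_approx_int by blast
    then obtain n where n: "\<forall>p\<in>G. padic_abs p (r p - of_int (n p)) \<le> real p powr (- real (K p))" by metis
    have "\<exists>x. \<forall>p\<in>G. [x = nat (n p mod int (p ^ K p))] (mod (p ^ K p))"
    proof (rule chinese_remainder_nat[OF fin])
      show "\<forall>i\<in>G. \<forall>j\<in>G. i \<noteq> j \<longrightarrow> coprime (i ^ K i) (j ^ K j)"
      proof (intro ballI impI)
        fix i j assume "i \<in> G" "j \<in> G" "i \<noteq> j"
        then have "coprime i j" using pr primes_coprime by blast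
        then show "coprime (i ^ K i) (j ^ K j)" by simp
      qed
    qed
    then obtain x where x: "\<forall>p\<in>G. [x = nat (n p mod int (p ^ K p))] (mod (p ^ K p))" by blast
    have xn: "\<forall>p\<in>G. int (p ^ K p) dvd (int x - n p)"
    proof
      fix p assume pG: "p \<in> G"
      let ?m = "p ^ K p"
      have m0: "?m > 0" using pr pG prime_gt_0_nat by simp
      have "x mod ?m = nat (n p mod int ?m) mod ?m" using x pG unfolding cong_def by blast
      then have "int (x mod ?m) = int (nat (n p mod int ?m) mod ?m)" by simp
      also have "\<dots> = n p mod int ?m"
      proof -
        have m0': "int ?m > 0" using m0 by simp
        have u1: "0 \<le> n p mod int ?m" using m0' by simp
        have u2: "n p mod int ?m < int ?m" using m0' by simp
        have iu: "int (nat (n p mod int ?m)) = n p mod int ?m" using u1 by simp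
        have "nat (n p mod int ?m) < ?m" using u2 iu by linarith
        then have "nat (n p mod int ?m) mod ?m = nat (n p mod int ?m)" by simp
        then show ?thesis using iu by simp
      qed
      finally have "int x mod int ?m = n p mod int ?m" by (simp add: zmod_int)
      then show "int ?m dvd (int x - n p)" by (simp add: mod_eq_dvd_iff)
    qed
    obtain m where m: "int Mm dvd (m - int x)" "m \<noteq> 0"
      "\<bar>real_of_int m - t * real P * real D\<bar> \<le> 2 * real_of_int (int Mm)"
      using near_int[of "int Mm" "int x" "t * real P * real D"] Mm0 by auto
    define q :: rat where "q = of_int m / (of_nat P * of_nat D)"
    have PD: "(of_nat P * of_nat D :: rat) \<noteq> 0" using P0 D0 by simp
    show "\<exists>q::rat. q \<noteq> 0 \<and>
           (\<forall>p\<in>G. padic_abs p (q - c p) < \<eta> p) \<and>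
           (\<forall>p. prime p \<longrightarrow> p \<notin> G \<longrightarrow> padic_abs p q * padic_abs p (of_nat D) \<le> 1) \<and>
           \<bar>real_of_rat q - t\<bar> \<le> 2 * real Mm / real D"
    proof (intro exI[of _ q] conjI ballI allI impI)
      show "q \<noteq> 0" unfolding q_def using m(2) PD by simp
    next
      fix p assume pG: "p \<in> G"
      have pp: "prime p" using pr pG by simp
      have "int (p ^ K p) dvd int Mm" using Mmdvd pG by (simp only: of_nat_dvd_iff)
      then have "int (p ^ K p) dvd (m - int x)" using m(1) dvd_trans by blast
      then have "int (p ^ K p) dvd ((m - int x) + (int x - n p))" using xn pG by (intro dvd_add) auto
      then have "int p ^ K p dvd (m - n p)" by simp
      then have a1: "padic_abs p (of_int (m - n p)) \<le> real p powr (- real (K p))"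
        using pa_int_dvd[OF pp] by blast
      have eq1: "of_int m - r p = of_int (m - n p) - (r p - of_int (n p))" by simp
      have a2: "padic_abs p (of_int m - r p) \<le> real p powr (- real (K p))"
        unfolding eq1 using pa_ultra_diff[OF pp, of "of_int (m - n p)" "r p - of_int (n p)"] a1 n pG
        by (meson max.bounded_iff order_trans)
      have eq2: "q - c p = (of_int m - r p) / (of_nat P * of_nat D)"
        unfolding q_def r_def using PD by (simp add: field_simps)
      have "padic_abs p (q - c p) = padic_abs p (of_int m - r p) / padic_abs p (of_nat P)"
        unfolding eq2 using PaD pG by (simp add: pa_divide[OF pp] pa_mult[OF pp])
      also have "\<dots> \<le> real p powr (- real (K p)) / padic_abs p (of_nat P)"
        using a2 Ppos pG by (intro divide_right_mono) (auto simp: less_imp_le)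
      also have "\<dots> < \<eta> p"
        using Kp Ppos pG by (simp add: divide_less_eq)
      finally show "padic_abs p (q - c p) < \<eta> p" .
    next
      fix p assume pp: "prime p" "p \<notin> G"
      have Dp: "padic_abs p (of_nat D) > 0" using pa_pos[OF pp(1)] D0 by simp
      have "padic_abs p q = padic_abs p (of_int m) / padic_abs p (of_nat D)"
        unfolding q_def using Pout pp by (simp add: pa_divide[OF pp(1)] pa_mult[OF pp(1)])
      then have "padic_abs p q * padic_abs p (of_nat D) = padic_abs p (of_int m)" using Dp by simp
      then show "padic_abs p q * padic_abs p (of_nat D) \<le> 1" using pa_int_le1[OF pp(1)] by simp
    next
      have PDr: "real P * real D > 0" using P0 D0 by simp
      have "real_of_rat q = real_of_int m / (real P * real D)"
        unfolding q_def by (simp add: of_rat_divide of_rat_mult)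
      moreover have ne: "real P * real D \<noteq> 0" using P0 D0 by simp
      ultimately have "real_of_rat q - t = (real_of_int m - t * (real P * real D)) / (real P * real D)"
        by (simp only: diff_divide_distrib nonzero_mult_div_cancel_right[OF ne])
      then have "\<bar>real_of_rat q - t\<bar> = \<bar>real_of_int m - t * real P * real D\<bar> / (real P * real D)"
        using PDr by (simp add: mult.assoc)
      also have "\<dots> \<le> 2 * real Mm / (real P * real D)"
        using m(3) PDr by (simp add: divide_right_mono)
      also have "\<dots> \<le> 2 * real Mm / real D"
        using P0 D0 Mm0 by (intro divide_left_mono) auto
      finally show "\<bar>real_of_rat q - t\<bar> \<le> 2 * real Mm / real D" .
    qed
  qed
qed



definition abox :: "(nat \<Rightarrow> padic set) \<Rightarrow> real set \<Rightarrow> adele set" where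
  "abox U V = {a \<in> adeles. (\<forall>p. prime p \<longrightarrow> fst a p \<in> U p) \<and> snd a \<in> V}"

definition boxok :: "(nat \<Rightarrow> padic set) \<Rightarrow> real set \<Rightarrow> bool" where
  "boxok U V \<longleftrightarrow> (\<forall>p. prime p \<longrightarrow> padic_open p (U p)) \<and> finite {p. prime p \<and> U p \<noteq> Zp p} \<and> open V"

definition stdU :: "adele \<Rightarrow> nat \<Rightarrow> padic set" where
  "stdU c p = (if fst c p \<in> Zp p then Zp p else Qp p)"

lemma adeles_iff: "c \<in> adeles \<longleftrightarrow> (\<forall>p. prime p \<longrightarrow> fst c p \<in> Qp p) \<and> (\<forall>p. \<not> prime p \<longrightarrow> fst c p = {})
                     \<and> finite {p. prime p \<and> fst c p \<notin> Zp p}"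
  by (cases c) (simp add: adeles_def)

lemma basic_iff: "W \<in> adele_basic_opens \<longleftrightarrow> (\<exists>U V. boxok U V \<and> W = abox U V)"
  unfolding adele_basic_opens_def boxok_def abox_def by blast

lemma boxok_Int:
  assumes "boxok U V" "boxok U' V'"
  shows "boxok (\<lambda>p. U p \<inter> U' p) (V \<inter> V')"
  unfolding boxok_def
proof (intro conjI allI impI)
  fix p :: nat assume "prime p"
  then show "padic_open p (U p \<inter> U' p)" using assms open_Int unfolding boxok_def by blast
next
  have "{p. prime p \<and> U p \<inter> U' p \<noteq> Zp p} \<subseteq> {p. prime p \<and> U p \<noteq> Zp p} \<union> {p. prime p \<and> U' p \<noteq> Zp p}"
    by auto
  then show "finite {p. prime p \<and> U p \<inter> U' p \<noteq> Zp p}" using assms unfolding boxok_def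
    by (meson finite_Un finite_subset)
next
  show "open (V \<inter> V')" using assms unfolding boxok_def by auto
qed

lemma abox_Int: "abox U V \<inter> abox U' V' = abox (\<lambda>p. U p \<inter> U' p) (V \<inter> V')"
  unfolding abox_def by auto

lemma gen_nbhd:
  assumes "generate_topology_on adele_basic_opens W"
  shows "x \<in> W \<Longrightarrow> \<exists>U V. boxok U V \<and> x \<in> abox U V \<and> abox U V \<subseteq> W"
  using assms
proof (induction arbitrary: x rule: generate_topology_on.induct)
  case Empty
  then show ?case by simp
next
  case (Int a b)
  obtain U V where 1: "boxok U V" "x \<in> abox U V" "abox U V \<subseteq> a" using Int by blast
  obtain U' V' where 2: "boxok U' V'" "x \<in> abox U' V'" "abox U' V' \<subseteq> b" using Int by blast
  show ?case
  proof (intro exI conjI)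
    show "boxok (\<lambda>p. U p \<inter> U' p) (V \<inter> V')" by (rule boxok_Int[OF 1(1) 2(1)])
    show "x \<in> abox (\<lambda>p. U p \<inter> U' p) (V \<inter> V')" using 1(2) 2(2) abox_Int[of U V U' V'] by blast
    show "abox (\<lambda>p. U p \<inter> U' p) (V \<inter> V') \<subseteq> a \<inter> b" using 1(3) 2(3) abox_Int[of U V U' V'] by blast
  qed
next
  case (UN K)
  then obtain k where kK: "k \<in> K" and xk: "x \<in> k" by blast
  obtain U V where UV: "boxok U V" "x \<in> abox U V" "abox U V \<subseteq> k" using UN.IH[OF kK xk] by blast
  have sub: "abox U V \<subseteq> \<Union> K" using UV(3) kK by blast
  show ?case
  proof (intro exI conjI)
    show "boxok U V" by (rule UV(1))
    show "x \<in> abox U V" by (rule UV(2))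
    show "abox U V \<subseteq> \<Union> K" by (rule sub)
  qed
next
  case (Basis s)
  then obtain U V where "boxok U V" "s = abox U V" using basic_iff by blast
  then show ?case using Basis.prems by blast
qed

lemma open_box: "boxok U V \<Longrightarrow> openin adele_topology (abox U V)"
  unfolding adele_topology_def by (rule topology_generated_by_Basis) (auto simp: basic_iff)

lemma stdU_ok:
  assumes "c \<in> adeles"
  shows "boxok (stdU c) UNIV" "c \<in> abox (stdU c) UNIV"
proof -
  have "{p. prime p \<and> stdU c p \<noteq> Zp p} \<subseteq> {p. prime p \<and> fst c p \<notin> Zp p}"
    unfolding stdU_def by auto
  then have "finite {p. prime p \<and> stdU c p \<noteq> Zp p}" using assms adeles_iff finite_subset by blast
  then show "boxok (stdU c) UNIV" unfolding boxok_def stdU_def using open_Zp open_Qp by auto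
  show "c \<in> abox (stdU c) UNIV" unfolding abox_def stdU_def using assms adeles_iff by auto
qed

lemma topspace_adele: "topspace adele_topology = adeles"
  unfolding adele_topology_def topology_generated_by_topspace
proof
  show "\<Union> adele_basic_opens \<subseteq> adeles"
  proof
    fix c assume "c \<in> \<Union> adele_basic_opens"
    then obtain W where "W \<in> adele_basic_opens" "c \<in> W" by blast
    then obtain U V where "c \<in> abox U V" using basic_iff by blast
    then show "c \<in> adeles" unfolding abox_def by simp
  qed
  show "adeles \<subseteq> \<Union> adele_basic_opens"
  proof
    fix c assume "c \<in> adeles"
    then show "c \<in> \<Union> adele_basic_opens" using stdU_ok basic_iff by blast
  qed
qed

lemma qa_fst: "prime p \<Longrightarrow> fst (adele_mul (adele_of_rat q) a) p = pmul p (pof_rat p q) (fst a p)"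
  by (simp add: adele_mul_def adele_of_rat_def)

lemma qa_fst_np: "\<not> prime p \<Longrightarrow> fst (adele_mul (adele_of_rat q) a) p = {}"
  by (simp add: adele_mul_def adele_of_rat_def)

lemma qa_snd: "snd (adele_mul (adele_of_rat q) a) = of_rat q * snd a"
  by (simp add: adele_mul_def adele_of_rat_def)

lemma Zp_iff: "x \<in> Zp p \<longleftrightarrow> x \<in> Qp p \<and> pdist p x (pof_rat p 0) \<le> 1"
  unfolding Zp_def by simp

lemma pa_rat_le1:
  assumes pp: "prime p" and nd: "\<not> p dvd nat (snd (quotient_of q))"
  shows "padic_abs p q \<le> 1"
proof -
  obtain n d where nd': "quotient_of q = (n, d)" by (cases "quotient_of q")
  have d: "d > 0" using quotient_of_denom_pos[OF nd'] .
  have qq: "q = of_int n / of_int d" using quotient_of_div[OF nd'] .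
  have "\<not> int p dvd d"
  proof
    assume "int p dvd d"
    then have "p dvd nat d" using d by (metis int_dvd_int_iff int_nat_eq less_le)
    then show False using nd nd' by simp
  qed
  then have "padic_abs p (of_int d) = 1" using pa_int_ndvd[OF pp] by blast
  then show ?thesis unfolding qq using pa_int_le1[OF pp] by (simp add: pa_divide[OF pp])
qed

lemma qa_mem:
  assumes aA: "a \<in> adeles"
  shows "adele_mul (adele_of_rat q) a \<in> adeles"
  unfolding adeles_iff
proof (intro conjI allI impI)
  fix p :: nat assume "prime p"
  then show "fst (adele_mul (adele_of_rat q) a) p \<in> Qp p"
    using qa_fst pmul_rat_Qp aA adeles_iff by metis
next
  fix p :: nat assume "\<not> prime p"
  then show "fst (adele_mul (adele_of_rat q) a) p = {}" by (rule qa_fst_np)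
next
  let ?d = "nat (snd (quotient_of q))"
  have d0: "?d > 0" using quotient_of_denom_pos' by simp
  have "{p. prime p \<and> fst (adele_mul (adele_of_rat q) a) p \<notin> Zp p}
        \<subseteq> {p. prime p \<and> fst a p \<notin> Zp p} \<union> {p. p dvd ?d}"
  proof
    fix p assume "p \<in> {p. prime p \<and> fst (adele_mul (adele_of_rat q) a) p \<notin> Zp p}"
    then have pp: "prime p" and nz0: "fst (adele_mul (adele_of_rat q) a) p \<notin> Zp p" by auto
    have nz: "pmul p (pof_rat p q) (fst a p) \<notin> Zp p" using nz0 unfolding qa_fst[OF pp] .
    show "p \<in> {p. prime p \<and> fst a p \<notin> Zp p} \<union> {p. p dvd ?d}"
    proof (rule ccontr)
      assume "p \<notin> {p. prime p \<and> fst a p \<notin> Zp p} \<union> {p. p dvd ?d}"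
      then have az: "fst a p \<in> Zp p" and nd: "\<not> p dvd ?d" using pp by auto
      have aq: "fst a p \<in> Qp p" using az Zp_iff by blast
      have "pdist p (pmul p (pof_rat p q) (fst a p)) (pof_rat p 0) = padic_abs p q * pdist p (fst a p) (pof_rat p 0)"
        using pmul_rat_pn[OF pp aq] .
      also have "\<dots> \<le> 1 * 1"
        using pa_rat_le1[OF pp nd] az Zp_iff pa_nonneg[OF pp] pn_nonneg[OF pp aq] by (intro mult_mono) auto
      finally have "pmul p (pof_rat p q) (fst a p) \<in> Zp p" using Zp_iff pmul_rat_Qp[OF pp aq] by simp
      then show False using nz by simp
    qed
  qed
  moreover have "finite ({p. prime p \<and> fst a p \<notin> Zp p} \<union> {p. p dvd ?d})"
    using aA adeles_iff d0 by simp
  ultimately show "finite {p. prime p \<and> fst (adele_mul (adele_of_rat q) a) p \<notin> Zp p}"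
    using finite_subset by blast
qed

lemma pn_discrete:
  assumes "prime p" "x \<in> Qp p" "pdist p x (pof_rat p 0) < 1"
  shows "pdist p x (pof_rat p 0) \<le> 1 / real p"
  using nlim_discrete[OF assms(1) Qp_rep(1)[OF assms(1,2)]] pn_rep[OF assms(1,2)] assms(3) by simp

lemma inv_constr:
  assumes aA: "a \<in> adeles" and nz: "\<forall>p. prime p \<longrightarrow> fst a p \<noteq> pof_rat p 0" and a0: "snd a \<noteq> 0"
    and fin: "finite {p. prime p \<and> pdist p (fst a p) (pof_rat p 0) < 1}"
  shows "adele_invertible a"
proof -
  define bi where "bi p = (SOME y. y \<in> Qp p \<and> pmul p (fst a p) y = pof_rat p 1 \<and>
       pdist p y (pof_rat p 0) = inverse (pdist p (fst a p) (pof_rat p 0)))" for p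
  have bi: "bi p \<in> Qp p \<and> pmul p (fst a p) (bi p) = pof_rat p 1 \<and>
       pdist p (bi p) (pof_rat p 0) = inverse (pdist p (fst a p) (pof_rat p 0))" if pp: "prime p" for p
  proof -
    have "fst a p \<in> Qp p" using aA adeles_iff pp by blast
    then have "\<exists>y. y \<in> Qp p \<and> pmul p (fst a p) y = pof_rat p 1 \<and>
       pdist p y (pof_rat p 0) = inverse (pdist p (fst a p) (pof_rat p 0))"
      using pinv_exists[OF pp] nz pp by blast
    then show ?thesis unfolding bi_def by (rule someI_ex)
  qed
  define b :: adele where "b = ((\<lambda>p. if prime p then bi p else {}), inverse (snd a))"
  have bA: "b \<in> adeles" unfolding adeles_iff
  proof (intro conjI allI impI)
    fix p :: nat assume "prime p" then show "fst b p \<in> Qp p" using bi unfolding b_def by simp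
  next
    fix p :: nat assume "\<not> prime p" then show "fst b p = {}" unfolding b_def by simp
  next
    have "{p. prime p \<and> fst b p \<notin> Zp p} \<subseteq> {p. prime p \<and> pdist p (fst a p) (pof_rat p 0) < 1}"
    proof
      fix p assume "p \<in> {p. prime p \<and> fst b p \<notin> Zp p}"
      then have pp: "prime p" and nZ: "bi p \<notin> Zp p" unfolding b_def by auto
      have aq: "fst a p \<in> Qp p" using aA adeles_iff pp by blast
      have "pdist p (bi p) (pof_rat p 0) > 1" using nZ bi[OF pp] Zp_iff by force
      then have "inverse (pdist p (fst a p) (pof_rat p 0)) > 1" using bi[OF pp] by simp
      then have "pdist p (fst a p) (pof_rat p 0) < 1" by (simp add: one_less_inverse_iff)
      then show "p \<in> {p. prime p \<and> pdist p (fst a p) (pof_rat p 0) < 1}" using pp by simp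
    qed
    then show "finite {p. prime p \<and> fst b p \<notin> Zp p}" using fin finite_subset by blast
  qed
  have f: "(\<lambda>p. if prime p then pmul p (fst a p) (fst b p) else {}) = (\<lambda>p. if prime p then pof_rat p 1 else {})"
  proof (rule ext)
    fix p :: nat
    show "(if prime p then pmul p (fst a p) (fst b p) else {}) = (if prime p then pof_rat p 1 else {})"
      using bi[of p] unfolding b_def by simp
  qed
  have s: "snd a * snd b = of_rat 1" unfolding b_def using a0 by simp
  have "adele_mul a b = adele_of_rat 1"
    unfolding adele_mul_def adele_of_rat_def using f s by simp
  then show ?thesis unfolding adele_invertible_def using bA by blast
qed



lemma core:
  assumes aA: "a \<in> adeles" and ninv: "\<not> adele_invertible a" and bA: "b \<in> adeles"
    and bz: "\<forall>p. prime p \<longrightarrow> fst a p = pof_rat p 0 \<longrightarrow> fst b p = pof_rat p 0"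
    and bz2: "snd a = 0 \<longrightarrow> snd b = 0"
    and ok: "boxok U V" and bU: "b \<in> abox U V"
  shows "\<exists>q. q \<noteq> 0 \<and> adele_mul (adele_of_rat q) a \<in> abox U V"
proof -
  have aQ: "\<forall>p. prime p \<longrightarrow> fst a p \<in> Qp p" and afin: "finite {p. prime p \<and> fst a p \<notin> Zp p}"
    using aA adeles_iff by auto
  have bQ: "\<forall>p. prime p \<longrightarrow> fst b p \<in> U p" and bV: "snd b \<in> V" using bU unfolding abox_def by auto
  have Uo: "\<forall>p. prime p \<longrightarrow> padic_open p (U p)" and Ufin: "finite {p. prime p \<and> U p \<noteq> Zp p}"
    and Vo: "open V" using ok unfolding boxok_def by auto
  define G where "G = {p. prime p \<and> (U p \<noteq> Zp p \<or> fst a p \<notin> Zp p)}"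
  have Gfin: "finite G"
  proof -
    have "G = {p. prime p \<and> U p \<noteq> Zp p} \<union> {p. prime p \<and> fst a p \<notin> Zp p}" unfolding G_def by auto
    then show ?thesis using Ufin afin by simp
  qed
  define G' where "G' = {p \<in> G. fst a p \<noteq> pof_rat p 0}"
  have G'fin: "finite G'" unfolding G'_def using Gfin by simp
  have G'pr: "\<forall>p\<in>G'. prime p" unfolding G'_def G_def by simp
  have "\<forall>p\<in>G'. \<exists>ce. snd ce > 0 \<and> (\<forall>q. padic_abs p (q - fst ce) < snd ce \<longrightarrow> pmul p (pof_rat p q) (fst a p) \<in> U p)"
  proof
    fix p assume pG: "p \<in> G'"
    have pp: "prime p" using G'pr pG by blast
    have anz: "fst a p \<noteq> pof_rat p 0" using pG unfolding G'_def by simp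
    have bUp: "fst b p \<in> U p" using bQ pp by blast
    have "U p \<subseteq> Qp p" "\<forall>x\<in>U p. \<exists>e>0. \<forall>y\<in>Qp p. pdist p x y < e \<longrightarrow> y \<in> U p"
      using Uo pp unfolding padic_open_def by auto
    then obtain e where e: "e > 0" "\<forall>y\<in>Qp p. pdist p (fst b p) y < e \<longrightarrow> y \<in> U p" using bUp by blast
    have bq: "fst b p \<in> Qp p" using bUp \<open>U p \<subseteq> Qp p\<close> by blast
    obtain c \<eta> where c: "\<eta> > 0" "\<forall>q. padic_abs p (q - c) < \<eta> \<longrightarrow> pdist p (fst b p) (pmul p (pof_rat p q) (fst a p)) < e"
      using approx_local[OF pp aQ[rule_format, OF pp] bq anz e(1)] by blast
    show "\<exists>ce. snd ce > 0 \<and> (\<forall>q. padic_abs p (q - fst ce) < snd ce \<longrightarrow> pmul p (pof_rat p q) (fst a p) \<in> U p)"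
    proof (intro exI[of _ "(c, \<eta>)"] conjI allI impI)
      show "snd (c, \<eta>) > 0" using c(1) by simp
      fix q assume "padic_abs p (q - fst (c, \<eta>)) < snd (c, \<eta>)"
      then have "padic_abs p (q - c) < \<eta>" by simp
      then show "pmul p (pof_rat p q) (fst a p) \<in> U p"
        using c(2) e(2) pmul_rat_Qp[OF pp aQ[rule_format, OF pp]] by blast
    qed
  qed
  from bchoice[OF this] obtain f where f: "\<forall>p\<in>G'. snd (f p) > 0 \<and> (\<forall>q. padic_abs p (q - fst (f p)) < snd (f p) \<longrightarrow> pmul p (pof_rat p q) (fst a p) \<in> U p)"
    by blast
  define c where "c p = fst (f p)" for p
  define \<eta> where "\<eta> p = snd (f p)" for p
  have c\<eta>: "\<forall>p\<in>G'. \<eta> p > 0 \<and> (\<forall>q. padic_abs p (q - c p) < \<eta> p \<longrightarrow> pmul p (pof_rat p q) (fst a p) \<in> U p)"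
    unfolding c_def \<eta>_def by (rule f)
  have eta: "\<forall>p\<in>G'. \<eta> p > 0" using c\<eta> by blast
  from nt_approx[OF G'fin G'pr eta, of c] obtain M where M: "\<forall>D::nat. D > 0 \<longrightarrow> (\<forall>p\<in>G'. \<not> p dvd D) \<longrightarrow> (\<forall>t::real. \<exists>q::rat. q \<noteq> 0 \<and>
           (\<forall>p\<in>G'. padic_abs p (q - c p) < \<eta> p) \<and>
           (\<forall>p. prime p \<longrightarrow> p \<notin> G' \<longrightarrow> padic_abs p q * padic_abs p (of_nat D) \<le> 1) \<and>
           \<bar>real_of_rat q - t\<bar> \<le> M / real D)"
    by (rule exE)
  obtain \<delta> where \<delta>: "\<delta> > 0" "\<forall>y. dist y (snd b) < \<delta> \<longrightarrow> y \<in> V"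
    using Vo bV unfolding open_dist by blast
  define Dok where "Dok D \<longleftrightarrow> D > 0 \<and> (\<forall>p\<in>G'. \<not> p dvd D) \<and>
      (\<forall>p. prime p \<longrightarrow> p \<notin> G \<longrightarrow> fst a p \<noteq> pof_rat p 0 \<longrightarrow>
         pdist p (fst a p) (pof_rat p 0) \<le> padic_abs p (of_nat D))" for D :: nat
  have aZ: "fst a p \<in> Zp p" if "prime p" "p \<notin> G" for p using that unfolding G_def by auto
  have aZ1: "pdist p (fst a p) (pof_rat p 0) \<le> 1" if "prime p" "p \<notin> G" for p
    using aZ[OF that] Zp_iff by blast
  have Dex: "\<exists>D t. Dok D \<and> (\<forall>q. \<bar>real_of_rat q - t\<bar> \<le> M / real D \<longrightarrow> \<bar>real_of_rat q * snd a - snd b\<bar> < \<delta>)"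
  proof (cases "snd a = 0")
    case True
    have "Dok 1" unfolding Dok_def
    proof (intro conjI ballI allI impI)
      show "(0::nat) < 1" by simp
      fix p assume "p \<in> G'" then have "prime p" using G'pr by blast
      then show "\<not> p dvd 1" using not_prime_1 by (metis nat_dvd_1_iff_1)
    next
      fix p assume "prime p" "p \<notin> G" "fst a p \<noteq> pof_rat p 0"
      then show "pdist p (fst a p) (pof_rat p 0) \<le> padic_abs p (of_nat 1)"
        using aZ1 pa_one by simp
    qed
    then show ?thesis using True bz2 \<delta>(1) by (intro exI[of _ 1] exI[of _ 0]) simp
  next
    case False
    have large: "\<exists>D. Dok D \<and> real D > Z" for Z :: real
    proof (cases "\<exists>p0. prime p0 \<and> fst a p0 = pof_rat p0 0")
      case True
      then obtain p0 where p0: "prime p0" "fst a p0 = pof_rat p0 0" by blast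
      obtain j :: nat where j: "Z < 2 ^ j" using real_arch_pow[of 2 Z] by auto
      define D where "D = p0 ^ j"
      have ndvd: "\<not> p dvd D" if "prime p" "p \<noteq> p0" for p
      proof
        assume "p dvd D"
        then have "p dvd p0" unfolding D_def using prime_dvd_power that(1) by blast
        then show False using primes_dvd_imp_eq[OF that(1) p0(1)] that(2) by blast
      qed
      have "Dok D" unfolding Dok_def
      proof (intro conjI ballI allI impI)
        show "D > 0" unfolding D_def using p0 prime_gt_0_nat by simp
        fix p assume "p \<in> G'"
        then have "prime p" "fst a p \<noteq> pof_rat p 0" using G'pr unfolding G'_def by auto
        then show "\<not> p dvd D" using ndvd p0 by metis
      next
        fix p assume pp: "prime p" "p \<notin> G" "fst a p \<noteq> pof_rat p 0"
        then have "p \<noteq> p0" using p0 by auto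
        then have "padic_abs p (of_nat D) = 1" using pa_nat_ndvd[OF pp(1)] ndvd pp(1) by blast
        then show "pdist p (fst a p) (pof_rat p 0) \<le> padic_abs p (of_nat D)" using aZ1 pp by simp
      qed
      moreover have "real D > Z"
      proof -
        have "(2::nat) ^ j \<le> p0 ^ j" using p0 prime_ge_2_nat by (intro power_mono) auto
        then have "(2::real) ^ j \<le> real D" unfolding D_def by (metis of_nat_le_iff of_nat_numeral of_nat_power)
        then show ?thesis using j by linarith
      qed
      ultimately show ?thesis by blast
    next
      case nz: False
      show ?thesis
      proof (cases "finite {p. prime p \<and> pdist p (fst a p) (pof_rat p 0) < 1}")
        case True
        have "adele_invertible a" using inv_constr[OF aA _ False True] nz by blast
        then show ?thesis using ninv by blast
      next
        case inf: False
        define I where "I = {p. prime p \<and> pdist p (fst a p) (pof_rat p 0) < 1} - G"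
        have "infinite I" unfolding I_def using inf Gfin by simp
        obtain j :: nat where j: "Z < 2 ^ j" using real_arch_pow[of 2 Z] by auto
        obtain S where S: "finite S" "card S = j" "S \<subseteq> I" using infinite_arbitrarily_large[OF \<open>infinite I\<close>] by blast
        have Spr: "\<forall>s\<in>S. prime s" using S(3) unfolding I_def by auto
        define D where "D = \<Prod>S"
        have D0: "D > 0" unfolding D_def using Spr S(1) by (simp add: prime_gt_0_nat prod_pos)
        have ndvd: "\<not> p dvd D" if pp1: "prime p" and pp2: "p \<notin> S" for p
        proof
          assume "p dvd D"
          then have "\<exists>s\<in>S. p dvd s" unfolding D_def using prime_dvd_prod_iff[OF S(1) pp1, of id] by simp
          then obtain s where s: "s \<in> S" "p dvd s" by blast
          then have "p = s" using primes_dvd_imp_eq[OF pp1] Spr by blast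
          then show False using s pp2 by simp
        qed
        have "Dok D" unfolding Dok_def
        proof (intro conjI ballI allI impI)
          show "D > 0" by (rule D0)
          fix p assume pG: "p \<in> G'"
          then have "prime p" "p \<in> G" using G'pr unfolding G'_def by auto
          moreover have "p \<notin> S" using S(3) \<open>p \<in> G\<close> unfolding I_def by blast
          ultimately show "\<not> p dvd D" using ndvd by blast
        next
          fix p assume pp: "prime p" "p \<notin> G" "fst a p \<noteq> pof_rat p 0"
          show "pdist p (fst a p) (pof_rat p 0) \<le> padic_abs p (of_nat D)"
          proof (cases "p \<in> S")
            case False
            then have "padic_abs p (of_nat D) = 1" using pa_nat_ndvd[OF pp(1)] ndvd pp(1) by blast
            then show ?thesis using aZ1 pp by simp
          next
            case True
            have lt1: "pdist p (fst a p) (pof_rat p 0) < 1" using True S(3) unfolding I_def by blast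
            have le: "pdist p (fst a p) (pof_rat p 0) \<le> 1 / real p"
              using pn_discrete[OF pp(1) aQ[rule_format, OF pp(1)] lt1] .
            have Dsplit: "D = p * \<Prod>(S - {p})" unfolding D_def using S(1) True by (simp add: prod.remove)
            have "\<not> p dvd \<Prod>(S - {p})"
            proof
              assume "p dvd \<Prod>(S - {p})"
              then obtain s where s: "s \<in> S - {p}" "p dvd s" using prime_dvd_prod_iff[OF _ pp(1), of "S - {p}" id] S(1) by auto
              then have "p = s" using primes_dvd_imp_eq[OF pp(1)] Spr by blast
              then show False using s by simp
            qed
            then have r1: "padic_abs p (of_nat (\<Prod>(S - {p}))) = 1" using pa_nat_ndvd[OF pp(1)] by blast
            have "padic_abs p (of_nat D) = padic_abs p (of_nat p) * padic_abs p (of_nat (\<Prod>(S - {p})))"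
              unfolding Dsplit of_nat_mult by (rule pa_mult[OF pp(1)])
            also have "\<dots> = 1 / real p" using r1 pa_p[OF pp(1)] by simp
            finally show ?thesis using le by simp
          qed
        qed
        moreover have "real D > Z"
        proof -
          have "(\<Prod>s\<in>S. (2::nat)) \<le> (\<Prod>s\<in>S. s)" using Spr prime_ge_2_nat by (intro prod_mono) auto
          then have "(2::nat) ^ j \<le> D" unfolding D_def using S(2) by simp
          then have "(2::real) ^ j \<le> real D" by (metis of_nat_le_iff of_nat_numeral of_nat_power)
          then show ?thesis using j by linarith
        qed
        ultimately show ?thesis by blast
      qed
    qed
    define Z where "Z = \<bar>snd a\<bar> * \<bar>M\<bar> / \<delta>"
    obtain D where D: "Dok D" "real D > Z" using large by blast
    have D0: "real D > 0" using D(1) unfolding Dok_def by simp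
    have key: "\<bar>snd a\<bar> * M < \<delta> * real D"
    proof -
      have "\<bar>snd a\<bar> * \<bar>M\<bar> < \<delta> * real D" using D(2) \<delta>(1) unfolding Z_def by (simp add: divide_less_eq mult.commute)
      moreover have "\<bar>snd a\<bar> * M \<le> \<bar>snd a\<bar> * \<bar>M\<bar>" by (intro mult_left_mono) auto
      ultimately show ?thesis by linarith
    qed
    show ?thesis
    proof (intro exI[of _ D] exI[of _ "snd b / snd a"] conjI allI impI)
      show "Dok D" by (rule D(1))
      fix q assume q: "\<bar>real_of_rat q - snd b / snd a\<bar> \<le> M / real D"
      have "real_of_rat q * snd a - snd b = snd a * (real_of_rat q - snd b / snd a)"
        using False by (simp add: field_simps)
      then have "\<bar>real_of_rat q * snd a - snd b\<bar> = \<bar>snd a\<bar> * \<bar>real_of_rat q - snd b / snd a\<bar>"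
        by (simp add: abs_mult)
      also have "\<dots> \<le> \<bar>snd a\<bar> * (M / real D)" using q by (intro mult_left_mono) auto
      also have "\<dots> < \<delta>" using key D0 by (simp add: field_simps)
      finally show "\<bar>real_of_rat q * snd a - snd b\<bar> < \<delta>" .
    qed
  qed
  then obtain D t where D: "Dok D" and Dt: "\<forall>q. \<bar>real_of_rat q - t\<bar> \<le> M / real D \<longrightarrow> \<bar>real_of_rat q * snd a - snd b\<bar> < \<delta>"
    by blast
  have D0: "D > 0" and Dcop: "\<forall>p\<in>G'. \<not> p dvd D" using D unfolding Dok_def by auto
  obtain q where q: "q \<noteq> 0" "\<forall>p\<in>G'. padic_abs p (q - c p) < \<eta> p"
    "\<forall>p. prime p \<longrightarrow> p \<notin> G' \<longrightarrow> padic_abs p q * padic_abs p (of_nat D) \<le> 1"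
    "\<bar>real_of_rat q - t\<bar> \<le> M / real D"
    using M D0 Dcop by blast
  show ?thesis
  proof (intro exI[of _ q] conjI)
    show "q \<noteq> 0" by (rule q(1))
    have "\<forall>p. prime p \<longrightarrow> fst (adele_mul (adele_of_rat q) a) p \<in> U p"
    proof (intro allI impI)
      fix p :: nat assume pp: "prime p"
      have aq: "fst a p \<in> Qp p" using aQ pp by blast
      have "pmul p (pof_rat p q) (fst a p) \<in> U p"
      proof (cases "p \<in> G'")
        case True
        then show ?thesis using c\<eta> q(2) by blast
      next
        case nG': False
        show ?thesis
        proof (cases "fst a p = pof_rat p 0")
          case True
          then have "pmul p (pof_rat p q) (fst a p) = fst b p" using pmul_rat_zero[OF pp] bz pp by simp
          then show ?thesis using bQ pp by simp
        next
          case False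
          then have nG: "p \<notin> G" using nG' unfolding G'_def by simp
          then have UZ: "U p = Zp p" unfolding G_def using pp by auto
          have le: "pdist p (fst a p) (pof_rat p 0) \<le> padic_abs p (of_nat D)"
            using D pp nG False unfolding Dok_def by blast
          have "pdist p (pmul p (pof_rat p q) (fst a p)) (pof_rat p 0) = padic_abs p q * pdist p (fst a p) (pof_rat p 0)"
            using pmul_rat_pn[OF pp aq] .
          also have "\<dots> \<le> padic_abs p q * padic_abs p (of_nat D)"
            using le pa_nonneg[OF pp] by (intro mult_left_mono) auto
          also have "\<dots> \<le> 1" using q(3) pp nG' by blast
          finally have "pmul p (pof_rat p q) (fst a p) \<in> Zp p" using Zp_iff pmul_rat_Qp[OF pp aq] by blast
          then show ?thesis using UZ by simp
        qed
      qed
      then show "fst (adele_mul (adele_of_rat q) a) p \<in> U p" unfolding qa_fst[OF pp] .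
    qed
    moreover have "snd (adele_mul (adele_of_rat q) a) \<in> V"
    proof -
      have "\<bar>real_of_rat q * snd a - snd b\<bar> < \<delta>" using Dt q(4) by blast
      then have "dist (real_of_rat q * snd a) (snd b) < \<delta>" by (simp add: dist_real_def)
      then show ?thesis unfolding qa_snd using \<delta>(2) by blast
    qed
    ultimately show "adele_mul (adele_of_rat q) a \<in> abox U V"
      unfolding abox_def using qa_mem[OF aA] by blast
  qed
qed



theorem lemma3p2:
  fixes a :: adele
  assumes "a \<in> adeles" and "\<not> adele_invertible a"
  shows "adele_topology closure_of {adele_mul (adele_of_rat q) a | q. q \<noteq> 0}
         = {b \<in> adeles. (\<forall>p. prime p \<longrightarrow> fst a p = pof_rat p 0 \<longrightarrow> fst b p = pof_rat p 0)
                       \<and> (snd a = 0 \<longrightarrow> snd b = 0)}"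
proof -
  let ?S = "{adele_mul (adele_of_rat q) a | q. q \<noteq> 0}"
  show ?thesis
  proof (rule equalityI; rule subsetI)
    fix x assume x: "x \<in> adele_topology closure_of ?S"
    have xA: "x \<in> adeles" using x unfolding in_closure_of topspace_adele by blast
    have cl: "\<exists>y. y \<in> ?S \<and> y \<in> W" if "x \<in> W" "openin adele_topology W" for W
      using x that unfolding in_closure_of by blast
    have c1: "\<forall>p. prime p \<longrightarrow> fst a p = pof_rat p 0 \<longrightarrow> fst x p = pof_rat p 0"
    proof (intro allI impI, rule ccontr)
      fix p :: nat assume pp: "prime p" and ap: "fst a p = pof_rat p 0" and xp: "fst x p \<noteq> pof_rat p 0"
      define U where "U r = (if r = p then {y \<in> Qp p. y \<noteq> pof_rat p 0} else stdU x r)" for r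
      have ok0: "boxok (stdU x) UNIV" by (rule stdU_ok(1)[OF xA])
      have ok: "boxok U UNIV" unfolding boxok_def
      proof (intro conjI allI impI)
        fix r :: nat assume rp: "prime r"
        show "padic_open r (U r)"
        proof (cases "r = p")
          case True then show ?thesis unfolding U_def using open_nz[OF pp] by simp
        next
          case False then show ?thesis unfolding U_def using ok0 rp unfolding boxok_def by simp
        qed
      next
        have "{r. prime r \<and> U r \<noteq> Zp r} \<subseteq> insert p {r. prime r \<and> stdU x r \<noteq> Zp r}" unfolding U_def by auto
        moreover have "finite {r. prime r \<and> stdU x r \<noteq> Zp r}" using ok0 unfolding boxok_def by blast
        ultimately show "finite {r. prime r \<and> U r \<noteq> Zp r}" using finite_subset by blast
      next
        show "open (UNIV :: real set)" by simp
      qed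
      have xin: "x \<in> abox U UNIV" unfolding abox_def
      proof (intro CollectI conjI allI impI xA)
        fix r :: nat assume rp: "prime r"
        show "fst x r \<in> U r"
        proof (cases "r = p")
          case True then show ?thesis unfolding U_def using xp xA adeles_iff pp by simp
        next
          case False then show ?thesis unfolding U_def using stdU_ok(2)[OF xA] rp unfolding abox_def by simp
        qed
      qed simp
      obtain y where y: "y \<in> ?S" "y \<in> abox U UNIV" using cl[OF xin open_box[OF ok]] by blast
      then obtain q where yq: "y = adele_mul (adele_of_rat q) a" by blast
      have "fst y p = pof_rat p 0" unfolding yq qa_fst[OF pp] ap by (rule pmul_rat_zero[OF pp])
      moreover have "fst y p \<in> U p" using y(2) pp unfolding abox_def by blast
      ultimately show False unfolding U_def by simp
    qed
    have c2: "snd a = 0 \<longrightarrow> snd x = 0"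
    proof (rule impI, rule ccontr)
      assume a0: "snd a = 0" and x0: "snd x \<noteq> 0"
      have o: "open (- {0::real})" by (simp add: open_Compl)
      have ok: "boxok (stdU x) (- {0})" using stdU_ok(1)[OF xA] o unfolding boxok_def by blast
      have xin: "x \<in> abox (stdU x) (- {0})" using stdU_ok(2)[OF xA] x0 unfolding abox_def by simp
      obtain y where y: "y \<in> ?S" "y \<in> abox (stdU x) (- {0})" using cl[OF xin open_box[OF ok]] by blast
      then obtain q where yq: "y = adele_mul (adele_of_rat q) a" by blast
      have "snd y = 0" unfolding yq qa_snd a0 by simp
      moreover have "snd y \<in> - {0}" using y(2) unfolding abox_def by blast
      ultimately show False by simp
    qed
    show "x \<in> {b \<in> adeles. (\<forall>p. prime p \<longrightarrow> fst a p = pof_rat p 0 \<longrightarrow> fst b p = pof_rat p 0)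
                       \<and> (snd a = 0 \<longrightarrow> snd b = 0)}" using xA c1 c2 by blast
  next
    fix b assume b: "b \<in> {b \<in> adeles. (\<forall>p. prime p \<longrightarrow> fst a p = pof_rat p 0 \<longrightarrow> fst b p = pof_rat p 0)
                       \<and> (snd a = 0 \<longrightarrow> snd b = 0)}"
    then have bA: "b \<in> adeles" and bz: "\<forall>p. prime p \<longrightarrow> fst a p = pof_rat p 0 \<longrightarrow> fst b p = pof_rat p 0"
      and bz2: "snd a = 0 \<longrightarrow> snd b = 0" by auto
    show "b \<in> adele_topology closure_of ?S"
      unfolding in_closure_of topspace_adele
    proof (intro conjI allI impI)
      show "b \<in> adeles" by (rule bA)
      fix W assume bW0: "b \<in> W \<and> openin adele_topology W"
      then have gen: "generate_topology_on adele_basic_opens W"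
        unfolding adele_topology_def using openin_topology_generated_by by blast
      have bW: "b \<in> W" using bW0 by blast
      obtain U V where UV: "boxok U V" "b \<in> abox U V" "abox U V \<subseteq> W" using gen_nbhd[OF gen bW] by blast
      obtain q where q: "q \<noteq> 0" "adele_mul (adele_of_rat q) a \<in> abox U V"
        using core[OF assms(1) assms(2) bA bz bz2 UV(1) UV(2)] by blast
      show "\<exists>y. y \<in> ?S \<and> y \<in> W"
      proof (intro exI conjI)
        show "adele_mul (adele_of_rat q) a \<in> ?S" using q(1) by blast
        show "adele_mul (adele_of_rat q) a \<in> W" using q(2) UV(3) by blast
      qed
    qed
  qed
qed


end
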